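(* For any smooth complex-valued potential $V(t,x)$, the maximal Lie invariance algebra $\mathfrak g_V$ of the equation $i\psi_t+\psi_{xx}+V(t,x)\psi=0$ consists of the vector fields $Q=D(\tau)+G(\chi)+\sigma M+\rho I+Z(\eta^0)$, where $\tau,\chi,\rho,\sigma$ run through the smooth real-valued functions of $t$ satisfying $$\tau V_t+\Big(\frac12\tau_tx+\chi\Big)V_x+\tau_tV=\frac18\tau_{ttt}x^2+\frac12\chi_{tt}x+\sigma_t-i\rho_t-\frac i4\tau_{tt},$$ and $\eta^0=\eta^0(t,x)$ runs through the solution set of the equation $i\eta^0_t+\eta^0_{xx}+V\eta^0=0$.
   Context: Equations $i\psi_t+\psi_{xx}+V(t,x)\psi=0$ with $\psi$ an unknown complex-valued function of the real variables $t,x$ and $V$ a smooth complex-valued potential. The conjugate $\psi^*$ is treated as an additional dependent variable, and vector fields act on the space of $(t,x,\psi,\psi^* )$; the maximal Lie invariance algebra consists of the vector fields generating one-parameter point symmetry groups of the equation (together with its complex conjugate). Notation: $M=i\psi\partial_\psi-i\psi^*\partial_{\psi^*}$, $I=\psi\partial_\psi+\psi^*\partial_{\psi^*}$, $D(\tau)=\tau\partial_t+\frac12\tau_tx\partial_x+\frac18\tau_{tt}x^2M$, $G(\chi)=\chi\partial_x+\frac12\chi_txM$, $Z(\eta)=\eta\partial_\psi+\eta^*\partial_{\psi^*}$; $\sigma M$ and $\rho I$ mean $\sigma(t)M$ and $\rho(t)I$. *)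

theory Defs
  imports "HOL-Analysis.Analysis"
begin

fun Ck :: "nat \<Rightarrow> ('a::real_normed_vector \<Rightarrow> 'b::real_normed_vector) \<Rightarrow> bool" where
  "Ck 0 f = continuous_on UNIV f"
| "Ck (Suc n) f = ((\<forall>x. f differentiable (at x)) \<and>
                    (\<forall>v. Ck n (\<lambda>x. frechet_derivative f (at x) v)))"

definition smooth :: "('a::real_normed_vector \<Rightarrow> 'b::real_normed_vector) \<Rightarrow> bool" where
  "smooth f \<longleftrightarrow> (\<forall>n. Ck n f)"

definition pt :: "(real \<times> real \<Rightarrow> 'b::real_normed_vector) \<Rightarrow> real \<times> real \<Rightarrow> 'b" where
  "pt f p = vector_derivative (\<lambda>s. f (s, snd p)) (at (fst p))"

definition px :: "(real \<times> real \<Rightarrow> 'b::real_normed_vector) \<Rightarrow> real \<times> real \<Rightarrow> 'b" where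
  "px f p = vector_derivative (\<lambda>y. f (fst p, y)) (at (snd p))"

definition schr :: "(real \<times> real \<Rightarrow> complex) \<Rightarrow> (real \<times> real \<Rightarrow> complex) \<Rightarrow> real \<times> real \<Rightarrow> complex" where
  "schr V \<psi> p = \<i> * pt \<psi> p + px (px \<psi>) p + V p * \<psi> p"

text \<open>A (real) point vector field Q = tau d_t + xi d_x + eta d_psi + eta^* d_psi^* on the space
  of (t,x,psi,psi^*), with tau, xi real-valued and eta complex-valued functions of (t,x,psi)
  (dependence on psi^* is dependence on the complex number psi, viewed as a point of R^2).\<close>
definition charact ::
  "(real \<times> real \<times> complex \<Rightarrow> real) \<Rightarrow> (real \<times> real \<times> complex \<Rightarrow> real) \<Rightarrow>
   (real \<times> real \<times> complex \<Rightarrow> complex) \<Rightarrow> (real \<times> real \<Rightarrow> complex) \<Rightarrow> real \<times> real \<Rightarrow> complex" where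
  "charact \<tau> \<xi> \<eta> \<psi> p =
     \<eta> (fst p, snd p, \<psi> p) - of_real (\<tau> (fst p, snd p, \<psi> p)) * pt \<psi> p
                          - of_real (\<xi> (fst p, snd p, \<psi> p)) * px \<psi> p"

text \<open>Second prolongation of Q applied to E = i psi_t + psi_xx + V psi, evaluated at the
  2-jet of psi at p.  Standard formulas:
  eta^t = D_t Phi + tau psi_tt + xi psi_tx,  eta^xx = D_x^2 Phi + tau psi_txx + xi psi_xxx,
  where Phi is the characteristic; the third-order terms cancel, so the value depends only
  on the 2-jet of psi at p.\<close>
definition prol_E ::
  "(real \<times> real \<Rightarrow> complex) \<Rightarrow> (real \<times> real \<times> complex \<Rightarrow> real) \<Rightarrow> (real \<times> real \<times> complex \<Rightarrow> real) \<Rightarrow>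
   (real \<times> real \<times> complex \<Rightarrow> complex) \<Rightarrow> (real \<times> real \<Rightarrow> complex) \<Rightarrow> real \<times> real \<Rightarrow> complex" where
  "prol_E V \<tau> \<xi> \<eta> \<psi> p =
    (let T = of_real (\<tau> (fst p, snd p, \<psi> p)) :: complex;
         X = of_real (\<xi> (fst p, snd p, \<psi> p)) :: complex;
         \<Phi> = charact \<tau> \<xi> \<eta> \<psi>;
         eta_t = pt \<Phi> p + T * pt (pt \<psi>) p + X * px (pt \<psi>) p;
         eta_xx = px (px \<Phi>) p + T * pt (px (px \<psi>)) p + X * px (px (px \<psi>)) p
     in \<i> * eta_t + eta_xx + (T * pt V p + X * px V p) * \<psi> p + V p * \<eta> (fst p, snd p, \<psi> p))"

text \<open>Q belongs to the maximal Lie invariance algebra g_V: smooth components and the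
  infinitesimal invariance criterion Q^(2) E = 0 on the manifold E = 0 in the 2-jet space
  (every 2-jet is realised by a smooth, e.g. polynomial, function psi; the conjugate
  equation is then automatically satisfied as well).\<close>
definition in_lie_alg ::
  "(real \<times> real \<Rightarrow> complex) \<Rightarrow> (real \<times> real \<times> complex \<Rightarrow> real) \<Rightarrow> (real \<times> real \<times> complex \<Rightarrow> real) \<Rightarrow>
   (real \<times> real \<times> complex \<Rightarrow> complex) \<Rightarrow> bool" where
  "in_lie_alg V \<tau> \<xi> \<eta> \<longleftrightarrow> smooth \<tau> \<and> smooth \<xi> \<and> smooth \<eta> \<and>
     (\<forall>\<psi>. smooth \<psi> \<longrightarrow> (\<forall>p. schr V \<psi> p = 0 \<longrightarrow> prol_E V \<tau> \<xi> \<eta> \<psi> p = 0))"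

end

theory Submission
  imports Defs
begin

abbreviation dd :: "('a::real_normed_vector \<Rightarrow> 'b::real_normed_vector) \<Rightarrow> 'a \<Rightarrow> 'a \<Rightarrow> 'b" where
  "dd f v x \<equiv> frechet_derivative f (at x) v"

lemma fd_eq: "(f has_derivative f') (at x) \<Longrightarrow> dd f v x = f' v"
  using frechet_derivative_at by metis

lemma Ck_mono: "Ck (Suc n) f \<Longrightarrow> Ck n f"
proof (induction n arbitrary: f)
  case 0
  then show ?case
    by (auto intro!: differentiable_imp_continuous_on simp: differentiable_on_def differentiable_at_withinI)
next
  case (Suc n)
  then show ?case by auto
qed


lemma smooth_differentiable: "smooth f \<Longrightarrow> f differentiable (at x)"
  unfolding smooth_def by (metis Ck.simps(2))

lemma smooth_has_derivative: "smooth f \<Longrightarrow> (f has_derivative frechet_derivative f (at x)) (at x)"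
  using smooth_differentiable frechet_derivative_works by blast

lemma smooth_dd: "smooth f \<Longrightarrow> smooth (\<lambda>x. dd f v x)"
  unfolding smooth_def by (metis Ck.simps(2))

lemma smooth_cont: "smooth f \<Longrightarrow> continuous_on UNIV f"
  unfolding smooth_def by (metis Ck.simps(1))

lemma smooth_linear_dd: "smooth f \<Longrightarrow> linear (\<lambda>v. dd f v x)"
  using smooth_has_derivative has_derivative_linear by blast

lemma Ck_const: "Ck n (\<lambda>x. c)"
  by (induction n arbitrary: c) auto

lemma Ck_add: "Ck n f \<Longrightarrow> Ck n g \<Longrightarrow> Ck n (\<lambda>x. f x + g x)"
proof (induction n arbitrary: f g)
  case 0
  then show ?case by (auto intro: continuous_on_add)
next
  case (Suc n)
  have e: "dd (\<lambda>x. f x + g x) v x = dd f v x + dd g v x" for v x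
    using Suc.prems frechet_derivative_works by (intro fd_eq has_derivative_add) auto
  show ?case using Suc by (auto simp: e)
qed

lemma Ck_bilinear:
  assumes "bounded_bilinear pr"
  shows "Ck n f \<Longrightarrow> Ck n g \<Longrightarrow> Ck n (\<lambda>x. pr (f x) (g x))"
proof (induction n arbitrary: f g)
  case 0
  then show ?case using bounded_bilinear.continuous_on[OF assms] by auto
next
  case (Suc n)
  have df: "\<And>x. (f has_derivative frechet_derivative f (at x)) (at x)"
    and dg: "\<And>x. (g has_derivative frechet_derivative g (at x)) (at x)"
    and cf: "\<And>v. Ck n (\<lambda>x. dd f v x)" and cg: "\<And>v. Ck n (\<lambda>x. dd g v x)"
    using Suc.prems by (simp_all add: frechet_derivative_works[symmetric])
  have cf0: "Ck n f" and cg0: "Ck n g" using Suc.prems Ck_mono by blast+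
  have e: "dd (\<lambda>x. pr (f x) (g x)) v x = pr (f x) (dd g v x) + pr (dd f v x) (g x)" for v x
    by (intro fd_eq bounded_bilinear.FDERIV[OF assms] df dg)
  have d: "(\<lambda>x. pr (f x) (g x)) differentiable (at x)" for x
    by (rule differentiableI, rule bounded_bilinear.FDERIV[OF assms df dg])
  have "Ck n (\<lambda>x. pr (f x) (dd g v x) + pr (dd f v x) (g x))" for v
    by (intro Ck_add Suc.IH cf cg cf0 cg0)
  then show ?case by (simp add: e d)
qed

lemma Ck_sum:
  fixes f :: "'i \<Rightarrow> 'a::real_normed_vector \<Rightarrow> 'b::real_normed_vector"
  shows "finite S \<Longrightarrow> (\<And>i. i \<in> S \<Longrightarrow> Ck n (f i)) \<Longrightarrow> Ck n (\<lambda>x. \<Sum>i\<in>S. f i x)"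
  by (induction S rule: finite_induct) (auto intro: Ck_add Ck_const)

lemma Ck_linear: "bounded_linear L \<Longrightarrow> Ck n L"
proof (induction n)
  case 0
  then show ?case by (simp add: linear_continuous_on)
next
  case (Suc n)
  have e: "dd L v x = L v" for v x using Suc.prems by (intro fd_eq bounded_linear_imp_has_derivative)
  show ?case using Suc.prems by (auto simp: e Ck_const bounded_linear_imp_differentiable)
qed

lemma Ck_comp:
  fixes f :: "'b::euclidean_space \<Rightarrow> 'c::real_normed_vector" and g :: "'a::real_normed_vector \<Rightarrow> 'b"
  shows "Ck n f \<Longrightarrow> Ck n g \<Longrightarrow> Ck n (\<lambda>x. f (g x))"
proof (induction n arbitrary: f g)
  case 0
  then show ?case by (auto intro: continuous_on_compose2)
next
  case (Suc n)
  have df: "\<And>y. (f has_derivative frechet_derivative f (at y)) (at y)"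
    and dg: "\<And>x. (g has_derivative frechet_derivative g (at x)) (at x)"
    and cf: "\<And>v. Ck n (\<lambda>x. dd f v x)" and cg: "\<And>v. Ck n (\<lambda>x. dd g v x)"
    using Suc.prems by (simp_all add: frechet_derivative_works[symmetric])
  have cf0: "Ck n f" and cg0: "Ck n g" using Suc.prems Ck_mono by blast+
  have lin: "linear (frechet_derivative f (at y))" for y
    using df has_derivative_linear by blast
  have ch: "((\<lambda>x. f (g x)) has_derivative (\<lambda>v. dd f (dd g v x) (g x))) (at x)" for x
    using diff_chain_at[OF dg df] by (simp add: o_def)
  have e: "dd (\<lambda>x. f (g x)) v x = (\<Sum>b\<in>Basis. (dd g v x \<bullet> b) *\<^sub>R dd f b (g x))" for v x
  proof -
    have "dd (\<lambda>x. f (g x)) v x = dd f (dd g v x) (g x)"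
      by (rule fd_eq[OF ch])
    also have "\<dots> = (\<Sum>b\<in>Basis. (dd g v x \<bullet> b) *\<^sub>R dd f b (g x))"
      by (subst euclidean_representation[symmetric, of "dd g v x"])
         (simp add: linear_sum[OF lin] linear_cmul[OF lin])
    finally show ?thesis .
  qed
  have d: "(\<lambda>x. f (g x)) differentiable (at x)" for x
    using ch by (rule differentiableI)
  have c1: "Ck n (\<lambda>x. dd g v x \<bullet> b)" for v b
    using Ck_bilinear[OF bounded_bilinear_inner, of n "\<lambda>x. dd g v x" "\<lambda>x. b"] cg Ck_const by blast
  have c2: "Ck n (\<lambda>x. dd f b (g x))" for b
    by (intro Suc.IH cf cg0)
  have "Ck n (\<lambda>x. \<Sum>b\<in>Basis. (dd g v x \<bullet> b) *\<^sub>R dd f b (g x))" for v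
    by (intro Ck_sum finite_Basis Ck_bilinear[OF bounded_bilinear_scaleR] c1 c2)
  then show ?case by (simp add: e d)
qed

lemma smooth_const[simp]: "smooth (\<lambda>x. c)"
  by (simp add: smooth_def Ck_const)

lemma smooth_linear: "bounded_linear L \<Longrightarrow> smooth L"
  by (simp add: smooth_def Ck_linear)

lemma smooth_add: "smooth f \<Longrightarrow> smooth g \<Longrightarrow> smooth (\<lambda>x. f x + g x)"
  by (simp add: smooth_def Ck_add)

lemma smooth_bilinear: "bounded_bilinear pr \<Longrightarrow> smooth f \<Longrightarrow> smooth g \<Longrightarrow> smooth (\<lambda>x. pr (f x) (g x))"
  by (simp add: smooth_def Ck_bilinear)

lemma smooth_comp:
  fixes f :: "'b::euclidean_space \<Rightarrow> 'c::real_normed_vector" and g :: "'a::real_normed_vector \<Rightarrow> 'b"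
  shows "smooth f \<Longrightarrow> smooth g \<Longrightarrow> smooth (\<lambda>x. f (g x))"
  by (simp add: smooth_def Ck_comp)

lemma smooth_mult: "smooth f \<Longrightarrow> smooth g \<Longrightarrow> smooth (\<lambda>x. f x * (g x :: 'b::real_normed_algebra))"
  by (rule smooth_bilinear[OF bounded_bilinear_mult])

lemma smooth_scaleR: "smooth f \<Longrightarrow> smooth g \<Longrightarrow> smooth (\<lambda>x. f x *\<^sub>R g x)"
  by (rule smooth_bilinear[OF bounded_bilinear_scaleR])

lemma smooth_uminus: "smooth f \<Longrightarrow> smooth (\<lambda>x. - f x)"
  using smooth_scaleR[of "\<lambda>x. -1" f] by simp

lemma smooth_diff: "smooth f \<Longrightarrow> smooth g \<Longrightarrow> smooth (\<lambda>x. f x - g x)"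
  using smooth_add[of f "\<lambda>x. - g x"] smooth_uminus[of g] by simp

lemma line_deriv:
  assumes "\<And>y. F differentiable (at y)"
  shows "((\<lambda>s. F (x + s *\<^sub>R a)) has_vector_derivative dd F a (x + s *\<^sub>R a)) (at s)"
proof -
  have 1: "((\<lambda>s. x + s *\<^sub>R a) has_vector_derivative a) (at s)"
    by (auto intro!: derivative_eq_intros)
  have 2: "(F has_derivative frechet_derivative F (at (x + s *\<^sub>R a))) (at (x + s *\<^sub>R a) within range (\<lambda>s. x + s *\<^sub>R a))"
    using assms frechet_derivative_works has_derivative_at_withinI by blast
  show ?thesis using vector_derivative_diff_chain_within[OF 1 2] by (simp add: o_def)
qed

lemma line_deriv_real:
  fixes F :: "'a::real_normed_vector \<Rightarrow> real"
  assumes "\<And>y. F differentiable (at y)"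
  shows "((\<lambda>s. F (x + s *\<^sub>R a)) has_real_derivative dd F a (x + s *\<^sub>R a)) (at s)"
  using line_deriv[OF assms] by (simp add: has_real_derivative_iff_has_vector_derivative)

lemma mvt_h:
  fixes \<phi> :: "real \<Rightarrow> real"
  assumes "h > 0" "\<And>s. (\<phi> has_real_derivative \<phi>' s) (at s)"
  shows "\<exists>s. 0 < s \<and> s < h \<and> \<phi> h - \<phi> 0 = h * \<phi>' s"
  using MVT2[of 0 h \<phi> \<phi>'] assms by auto

lemma delta_lemma:
  fixes f :: "'a::real_normed_vector \<Rightarrow> real"
  assumes "smooth f" "h > 0"
  shows "\<exists>s t. 0 < s \<and> s < h \<and> 0 < t \<and> t < h \<and>
    f (x + h *\<^sub>R b + h *\<^sub>R a) - f (x + h *\<^sub>R a) - f (x + h *\<^sub>R b) + f x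
      = h * h * dd (\<lambda>y. dd f a y) b (x + s *\<^sub>R a + t *\<^sub>R b)"
proof -
  have df: "\<And>y. f differentiable (at y)" using assms smooth_differentiable by blast
  have sa: "smooth (\<lambda>y. dd f a y)" using assms smooth_dd by blast
  have dfa: "\<And>y. (\<lambda>y. dd f a y) differentiable (at y)" using sa smooth_differentiable by blast
  define \<phi> where "\<phi> s = f ((x + h *\<^sub>R b) + s *\<^sub>R a) - f (x + s *\<^sub>R a)" for s
  have "(\<phi> has_real_derivative (dd f a ((x + h *\<^sub>R b) + s *\<^sub>R a) - dd f a (x + s *\<^sub>R a))) (at s)" for s
    unfolding \<phi>_def by (intro DERIV_diff line_deriv_real df)
  from mvt_h[OF assms(2) this] obtain s where s: "0 < s" "s < h"
    and e1: "\<phi> h - \<phi> 0 = h * (dd f a ((x + h *\<^sub>R b) + s *\<^sub>R a) - dd f a (x + s *\<^sub>R a))" by blast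
  define cc where "cc t = dd f a ((x + s *\<^sub>R a) + t *\<^sub>R b)" for t
  have "(cc has_real_derivative dd (\<lambda>y. dd f a y) b ((x + s *\<^sub>R a) + t *\<^sub>R b)) (at t)" for t
    unfolding cc_def by (rule line_deriv_real[OF dfa])
  from mvt_h[OF assms(2) this] obtain t where t: "0 < t" "t < h"
    and e2: "cc h - cc 0 = h * dd (\<lambda>y. dd f a y) b ((x + s *\<^sub>R a) + t *\<^sub>R b)" by blast
  have c0: "cc 0 = dd f a (x + s *\<^sub>R a)" by (simp add: cc_def)
  have ch: "cc h = dd f a ((x + h *\<^sub>R b) + s *\<^sub>R a)" unfolding cc_def
    by (rule arg_cong[where f="dd f a"]) (simp add: algebra_simps)
  have "dd f a ((x + h *\<^sub>R b) + s *\<^sub>R a) - dd f a (x + s *\<^sub>R a) = cc h - cc 0"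
    by (simp only: c0 ch)
  then have "\<phi> h - \<phi> 0 = h * h * dd (\<lambda>y. dd f a y) b ((x + s *\<^sub>R a) + t *\<^sub>R b)"
    using e1 e2 by simp
  then show ?thesis using s t unfolding \<phi>_def by (intro exI[of _ s] exI[of _ t]) (simp add: algebra_simps)
qed

lemma sym2_real:
  fixes f :: "'a::real_normed_vector \<Rightarrow> real"
  assumes "smooth f"
  shows "dd (\<lambda>y. dd f a y) b x = dd (\<lambda>y. dd f b y) a x"
proof (rule ccontr)
  define Dab where "Dab = (\<lambda>y. dd (\<lambda>y. dd f a y) b y)"
  define Dba where "Dba = (\<lambda>y. dd (\<lambda>y. dd f b y) a y)"
  assume ne: "dd (\<lambda>y. dd f a y) b x \<noteq> dd (\<lambda>y. dd f b y) a x"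
  then have ne': "Dab x \<noteq> Dba x" unfolding Dab_def Dba_def .
  define \<epsilon> where "\<epsilon> = \<bar>Dab x - Dba x\<bar> / 2"
  have \<epsilon>: "\<epsilon> > 0" using ne' unfolding \<epsilon>_def by simp
  have cab: "continuous (at x) Dab" unfolding Dab_def
    using smooth_cont[OF smooth_dd[OF smooth_dd[OF assms]]] continuous_on_eq_continuous_at open_UNIV by blast
  have cba: "continuous (at x) Dba" unfolding Dba_def
    using smooth_cont[OF smooth_dd[OF smooth_dd[OF assms]]] continuous_on_eq_continuous_at open_UNIV by blast
  obtain d1 where d1: "d1 > 0" "\<And>y. dist y x < d1 \<Longrightarrow> dist (Dab y) (Dab x) < \<epsilon>"
    using cab \<epsilon> unfolding continuous_at_eps_delta by blast
  obtain d2 where d2: "d2 > 0" "\<And>y. dist y x < d2 \<Longrightarrow> dist (Dba y) (Dba x) < \<epsilon>"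
    using cba \<epsilon> unfolding continuous_at_eps_delta by blast
  define h where "h = min d1 d2 / (2 * (norm a + norm b + 1))"
  have pos: "norm a + norm b + 1 > 0" using norm_ge_zero[of a] norm_ge_zero[of b] by linarith
  have h: "h > 0" using d1 d2 pos unfolding h_def by (intro divide_pos_pos) auto
  have hb: "h * (norm a + norm b) < min d1 d2"
  proof -
    have "h * (norm a + norm b) \<le> h * (norm a + norm b + 1)" using h by simp
    also have "\<dots> = min d1 d2 / 2" unfolding h_def using pos by (simp add: field_simps)
    also have "\<dots> < min d1 d2" using d1 d2 by (simp add: min_def)
    finally show ?thesis .
  qed
  have close: "dist (x + s *\<^sub>R u + t *\<^sub>R w) x < min d1 d2"
    if "0 < s" "s < h" "0 < t" "t < h" "{u, w} = {a, b}" for s t u w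
  proof -
    have "dist (x + s *\<^sub>R u + t *\<^sub>R w) x = norm (s *\<^sub>R u + t *\<^sub>R w)" by (simp add: dist_norm)
    also have "\<dots> \<le> s * norm u + t * norm w"
      using that by (metis abs_of_pos norm_scaleR norm_triangle_ineq)
    also have "\<dots> \<le> h * norm u + h * norm w"
      using that by (intro add_mono mult_right_mono) auto
    also have "\<dots> = h * (norm a + norm b)"
      using that by (auto simp: doubleton_eq_iff algebra_simps)
    finally show ?thesis using hb by simp
  qed
  obtain s1 t1 where st1: "0 < s1" "s1 < h" "0 < t1" "t1 < h"
    and E1: "f (x + h *\<^sub>R b + h *\<^sub>R a) - f (x + h *\<^sub>R a) - f (x + h *\<^sub>R b) + f x
      = h * h * Dab (x + s1 *\<^sub>R a + t1 *\<^sub>R b)"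
    using delta_lemma[OF assms h, of x b a] unfolding Dab_def by blast
  obtain s2 t2 where st2: "0 < s2" "s2 < h" "0 < t2" "t2 < h"
    and E2: "f (x + h *\<^sub>R a + h *\<^sub>R b) - f (x + h *\<^sub>R b) - f (x + h *\<^sub>R a) + f x
      = h * h * Dba (x + s2 *\<^sub>R b + t2 *\<^sub>R a)"
    using delta_lemma[OF assms h, of x a b] unfolding Dba_def by blast
  have "f (x + h *\<^sub>R a + h *\<^sub>R b) = f (x + h *\<^sub>R b + h *\<^sub>R a)" by (simp add: add_ac)
  then have "h * h * Dab (x + s1 *\<^sub>R a + t1 *\<^sub>R b) = h * h * Dba (x + s2 *\<^sub>R b + t2 *\<^sub>R a)"
    using E1 E2 by linarith
  then have eq: "Dab (x + s1 *\<^sub>R a + t1 *\<^sub>R b) = Dba (x + s2 *\<^sub>R b + t2 *\<^sub>R a)" using h by simp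
  have "dist (Dab (x + s1 *\<^sub>R a + t1 *\<^sub>R b)) (Dab x) < \<epsilon>"
    using close[OF st1, of a b] by (intro d1(2)) auto
  moreover have "dist (Dba (x + s2 *\<^sub>R b + t2 *\<^sub>R a)) (Dba x) < \<epsilon>"
    using close[OF st2, of b a] by (intro d2(2)) (auto simp: insert_commute)
  ultimately have "\<bar>Dab x - Dba x\<bar> < 2 * \<epsilon>" using eq by (simp add: dist_real_def)
  then show False unfolding \<epsilon>_def by simp
qed


lemma dd_inner:
  assumes "F differentiable (at y)"
  shows "dd (\<lambda>y. F y \<bullet> e) v y = dd F v y \<bullet> e"
proof -
  have "(F has_derivative frechet_derivative F (at y)) (at y)" using assms frechet_derivative_works by blast
  then have "((\<lambda>y. F y \<bullet> e) has_derivative (\<lambda>v. dd F v y \<bullet> e)) (at y)"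
    by (rule has_derivative_inner_left)
  then show ?thesis by (rule fd_eq)
qed

lemma smooth_inner_const: "smooth F \<Longrightarrow> smooth (\<lambda>y. F y \<bullet> e)"
  using smooth_bilinear[OF bounded_bilinear_inner, of F "\<lambda>y. e"] by simp

lemma sym2:
  fixes F :: "'a::real_normed_vector \<Rightarrow> 'b::euclidean_space"
  assumes "smooth F"
  shows "dd (\<lambda>y. dd F a y) b x = dd (\<lambda>y. dd F b y) a x"
proof (rule euclidean_eqI)
  fix e :: 'b assume "e \<in> Basis"
  have dF: "\<And>y. F differentiable (at y)" using assms smooth_differentiable by blast
  have e1: "(\<lambda>y. dd F u y \<bullet> e) = (\<lambda>y. dd (\<lambda>z. F z \<bullet> e) u y)" for u
    using dd_inner[OF dF] by simp
  have "dd (\<lambda>y. dd F a y) b x \<bullet> e = dd (\<lambda>y. dd F a y \<bullet> e) b x"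
    using dd_inner[OF smooth_differentiable[OF smooth_dd[OF assms]]] by simp
  also have "\<dots> = dd (\<lambda>y. dd (\<lambda>z. F z \<bullet> e) a y) b x" by (simp only: e1)
  also have "\<dots> = dd (\<lambda>y. dd (\<lambda>z. F z \<bullet> e) b y) a x"
    by (rule sym2_real[OF smooth_inner_const[OF assms]])
  also have "\<dots> = dd (\<lambda>y. dd F b y \<bullet> e) a x" by (simp only: e1)
  also have "\<dots> = dd (\<lambda>y. dd F b y) a x \<bullet> e"
    using dd_inner[OF smooth_differentiable[OF smooth_dd[OF assms]]] by simp
  finally show "dd (\<lambda>y. dd F a y) b x \<bullet> e = dd (\<lambda>y. dd F b y) a x \<bullet> e" .
qed

lemma pt_hvd:
  fixes f :: "real \<times> real \<Rightarrow> 'b::real_normed_vector"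
  assumes "smooth f"
  shows "((\<lambda>s. f (s, x)) has_vector_derivative pt f (s, x)) (at s)"
proof -
  have "((\<lambda>s. f ((0, x) + s *\<^sub>R (1, 0))) has_vector_derivative dd f (1, 0) ((0, x) + s *\<^sub>R (1, 0))) (at s)"
    by (rule line_deriv) (use assms smooth_differentiable in blast)
  then have h: "((\<lambda>s. f (s, x)) has_vector_derivative dd f (1, 0) (s, x)) (at s)" by simp
  then have "pt f (s, x) = dd f (1, 0) (s, x)" unfolding pt_def by (simp add: vector_derivative_at)
  then show ?thesis using h by simp
qed

lemma px_hvd:
  fixes f :: "real \<times> real \<Rightarrow> 'b::real_normed_vector"
  assumes "smooth f"
  shows "((\<lambda>y. f (t, y)) has_vector_derivative px f (t, y)) (at y)"
proof -
  have "((\<lambda>y. f ((t, 0) + y *\<^sub>R (0, 1))) has_vector_derivative dd f (0, 1) ((t, 0) + y *\<^sub>R (0, 1))) (at y)"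
    by (rule line_deriv) (use assms smooth_differentiable in blast)
  then have h: "((\<lambda>y. f (t, y)) has_vector_derivative dd f (0, 1) (t, y)) (at y)" by simp
  then have "px f (t, y) = dd f (0, 1) (t, y)" unfolding px_def by (simp add: vector_derivative_at)
  then show ?thesis using h by simp
qed

lemma pt_dd: "smooth f \<Longrightarrow> pt f = (\<lambda>p. dd f (1, 0) p)"
proof
  fix p :: "real \<times> real" assume "smooth f"
  obtain s x where p: "p = (s, x)" by fastforce
  have "((\<lambda>s. f ((0, x) + s *\<^sub>R (1, 0))) has_vector_derivative dd f (1, 0) ((0, x) + s *\<^sub>R (1, 0))) (at s)"
    by (rule line_deriv) (use \<open>smooth f\<close> smooth_differentiable in blast)
  then show "pt f p = dd f (1, 0) p" unfolding pt_def p by (simp add: vector_derivative_at)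
qed

lemma px_dd: "smooth f \<Longrightarrow> px f = (\<lambda>p. dd f (0, 1) p)"
proof
  fix p :: "real \<times> real" assume "smooth f"
  obtain t y where p: "p = (t, y)" by fastforce
  have "((\<lambda>y. f ((t, 0) + y *\<^sub>R (0, 1))) has_vector_derivative dd f (0, 1) ((t, 0) + y *\<^sub>R (0, 1))) (at y)"
    by (rule line_deriv) (use \<open>smooth f\<close> smooth_differentiable in blast)
  then show "px f p = dd f (0, 1) p" unfolding px_def p by (simp add: vector_derivative_at)
qed

lemma smooth_pt: assumes "smooth f" shows "smooth (pt f)"
  unfolding pt_dd[OF assms] by (rule smooth_dd[OF assms])

lemma smooth_px: assumes "smooth f" shows "smooth (px f)"
  unfolding px_dd[OF assms] by (rule smooth_dd[OF assms])

lemma pt_px_sym: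
  fixes f :: "real \<times> real \<Rightarrow> 'b::euclidean_space"
  assumes "smooth f"
  shows "pt (px f) = px (pt f)"
proof -
  have "pt (px f) = (\<lambda>p. dd (px f) (1, 0) p)" by (rule pt_dd[OF smooth_px[OF assms]])
  also have "\<dots> = (\<lambda>p. dd (\<lambda>q. dd f (0, 1) q) (1, 0) p)" by (simp only: px_dd[OF assms])
  also have "\<dots> = (\<lambda>p. dd (\<lambda>q. dd f (1, 0) q) (0, 1) p)" by (simp only: sym2[OF assms])
  also have "\<dots> = (\<lambda>p. dd (pt f) (0, 1) p)" by (simp only: pt_dd[OF assms])
  also have "\<dots> = px (pt f)" by (rule px_dd[OF smooth_pt[OF assms], symmetric])
  finally show ?thesis .
qed

lemma smooth_real_deriv:
  fixes T :: "real \<Rightarrow> real"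
  assumes "smooth T"
  shows "(T has_real_derivative deriv T t) (at t)" and "smooth (deriv T)"
proof -
  have D: "(T has_real_derivative deriv T t) (at t)" for t
    using assms smooth_differentiable DERIV_deriv_iff_real_differentiable by blast
  then show "(T has_real_derivative deriv T t) (at t)" .
  have "deriv T t = dd T 1 t" for t
    using fd_eq[OF D[of t, unfolded has_field_derivative_def], of 1]
    by simp
  then have "deriv T = (\<lambda>t. dd T 1 t)" by auto
  then show "smooth (deriv T)" using smooth_dd[OF assms] by simp
qed

lemma smooth_deriv_pow: "smooth T \<Longrightarrow> smooth ((deriv ^^ n) (T :: real \<Rightarrow> real))"
  by (induction n) (simp_all add: smooth_real_deriv(2))

lemma deriv_pow_simps: "(deriv ^^ 2) f = deriv (deriv f)" "(deriv ^^ 3) f = deriv (deriv (deriv f))"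
  by (simp_all add: numeral_eq_Suc)

lemma conv_prol:
  fixes V :: "real \<times> real \<Rightarrow> complex" and T chi \<sigma> \<rho> :: "real \<Rightarrow> real"
  assumes sT: "smooth T" and sc: "smooth chi" and ss: "smooth \<sigma>" and sr: "smooth \<rho>" and se: "smooth \<eta>0"
    and Vc: "\<And>t x. of_real (T t) * pt V (t, x)
              + of_real (deriv T t * x / 2 + chi t) * px V (t, x)
              + of_real (deriv T t) * V (t, x)
            = of_real (deriv (deriv (deriv T)) t * x\<^sup>2 / 8 + deriv (deriv chi) t * x / 2 + deriv \<sigma> t)
              - \<i> * of_real (deriv \<rho> t) - \<i> / 4 * of_real (deriv (deriv T) t)"
    and s0: "\<And>p. schr V \<eta>0 p = 0"
    and htau: "tau = (\<lambda>(t, x, \<psi>). T t)"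
    and hxi: "xi = (\<lambda>(t, x, \<psi>). deriv T t * x / 2 + chi t)"
    and heta: "eta = (\<lambda>(t, x, \<psi>). \<i> * of_real (deriv (deriv T) t * x\<^sup>2 / 8 + deriv chi t * x / 2 + \<sigma> t) * \<psi>
           + of_real (\<rho> t) * \<psi> + \<eta>0 (t, x))"
    and sp: "smooth \<psi>" and sch: "schr V \<psi> (t0, x0) = 0"
  shows "prol_E V tau xi eta \<psi> (t0, x0) = 0"
proof -
  define T1 where "T1 = deriv T"
  define T2 where "T2 = deriv T1"
  define T3 where "T3 = deriv T2"
  define c1 where "c1 = deriv chi"
  define c2 where "c2 = deriv c1"
  define s1 where "s1 = deriv \<sigma>"
  define r1 where "r1 = deriv \<rho>"
  have sT1: "smooth T1" and sT2: "smooth T2" and sc1: "smooth c1"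
    unfolding T1_def T2_def c1_def using smooth_real_deriv(2) sT sc by blast+
  have DT: "\<And>s. (T has_real_derivative T1 s) (at s)" unfolding T1_def using smooth_real_deriv(1)[OF sT] .
  have DT1: "\<And>s. (T1 has_real_derivative T2 s) (at s)" unfolding T2_def using smooth_real_deriv(1)[OF sT1] .
  have DT2: "\<And>s. (T2 has_real_derivative T3 s) (at s)" unfolding T3_def using smooth_real_deriv(1)[OF sT2] .
  have Dc: "\<And>s. (chi has_real_derivative c1 s) (at s)" unfolding c1_def using smooth_real_deriv(1)[OF sc] .
  have Dc1: "\<And>s. (c1 has_real_derivative c2 s) (at s)" unfolding c2_def using smooth_real_deriv(1)[OF sc1] .
  have Ds: "\<And>s. (\<sigma> has_real_derivative s1 s) (at s)" unfolding s1_def using smooth_real_deriv(1)[OF ss] .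
  have Dr: "\<And>s. (\<rho> has_real_derivative r1 s) (at s)" unfolding r1_def using smooth_real_deriv(1)[OF sr] .
  define pst where "pst = pt \<psi>"
  define psx where "psx = px \<psi>"
  define pstt where "pstt = pt pst"
  define psxt where "psxt = pt psx"
  define pstx where "pstx = px pst"
  define psxx where "psxx = px psx"
  define pstxx where "pstxx = px pstx"
  define psxxx where "psxxx = px psxx"
  define e0t where "e0t = pt \<eta>0"
  define e0x where "e0x = px \<eta>0"
  define e0xx where "e0xx = px e0x"
  have sps: "smooth pst" "smooth psx" "smooth pstx" "smooth psxx" "smooth e0x"
    unfolding pst_def psx_def pstx_def psxx_def e0x_def using sp se smooth_pt smooth_px by blast+
  have symm1: "psxt = pstx" unfolding psxt_def pstx_def psx_def pst_def by (rule pt_px_sym[OF sp])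
  have symm2: "pt psxx = pstxx"
  proof -
    have "pt psxx = px (pt psx)" unfolding psxx_def by (rule pt_px_sym[OF sps(2)])
    also have "\<dots> = pstxx" unfolding pstxx_def using symm1 psxt_def by simp
    finally show ?thesis .
  qed
  define \<Phi> where "\<Phi> = charact tau xi eta \<psi>"
  define A where "A = (\<lambda>s y. T2 s * y\<^sup>2 / 8 + c1 s * y / 2 + \<sigma> s)"
  have \<Phi>eq: "\<Phi> (s, y) = \<i> * of_real (A s y) * \<psi> (s, y) + of_real (\<rho> s) * \<psi> (s, y) + \<eta>0 (s, y)
      - of_real (T s) * pst (s, y) - of_real (T1 s * y / 2 + chi s) * psx (s, y)" for s y
    unfolding \<Phi>_def charact_def htau hxi heta A_def T1_def T2_def c1_def pst_def psx_def by simp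
  have Dt: "((\<lambda>s. \<Phi> (s, x0)) has_vector_derivative
      \<i> * of_real (T3 t0 * x0\<^sup>2 / 8 + c2 t0 * x0 / 2 + s1 t0) * \<psi> (t0, x0)
      + \<i> * of_real (A t0 x0) * pst (t0, x0)
      + of_real (r1 t0) * \<psi> (t0, x0) + of_real (\<rho> t0) * pst (t0, x0) + e0t (t0, x0)
      - of_real (T1 t0) * pst (t0, x0) - of_real (T t0) * pstt (t0, x0)
      - of_real (T2 t0 * x0 / 2 + c1 t0) * psx (t0, x0) - of_real (T1 t0 * x0 / 2 + chi t0) * psxt (t0, x0)) (at t0)"
    unfolding \<Phi>eq A_def pst_def[symmetric] psx_def[symmetric]
    apply (rule derivative_eq_intros DT DT1 DT2 Dc Dc1 Ds Dr pt_hvd[OF sp, unfolded pst_def[symmetric]]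
         pt_hvd[OF sps(1), unfolded pstt_def[symmetric]] pt_hvd[OF sps(2), unfolded psxt_def[symmetric]]
         pt_hvd[OF se, unfolded e0t_def[symmetric]] refl | force)+
    apply ((simp add: algebra_simps)?)
    done
  have ptPhi: "pt \<Phi> (t0, x0) = \<i> * of_real (T3 t0 * x0\<^sup>2 / 8 + c2 t0 * x0 / 2 + s1 t0) * \<psi> (t0, x0)
      + \<i> * of_real (A t0 x0) * pst (t0, x0)
      + of_real (r1 t0) * \<psi> (t0, x0) + of_real (\<rho> t0) * pst (t0, x0) + e0t (t0, x0)
      - of_real (T1 t0) * pst (t0, x0) - of_real (T t0) * pstt (t0, x0)
      - of_real (T2 t0 * x0 / 2 + c1 t0) * psx (t0, x0) - of_real (T1 t0 * x0 / 2 + chi t0) * psxt (t0, x0)"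
    unfolding pt_def using Dt by (simp add: vector_derivative_at)
  define E where "E y = \<i> * of_real (T2 t0 * y / 4 + c1 t0 / 2) * \<psi> (t0, y) + \<i> * of_real (A t0 y) * psx (t0, y)
     + of_real (\<rho> t0) * psx (t0, y) + e0x (t0, y) - of_real (T t0) * pstx (t0, y)
     - of_real (T1 t0 / 2) * psx (t0, y) - of_real (T1 t0 * y / 2 + chi t0) * psxx (t0, y)" for y
  have Dx: "((\<lambda>y. \<Phi> (t0, y)) has_vector_derivative E y) (at y)" for y
    unfolding \<Phi>eq A_def E_def
    apply (rule derivative_eq_intros px_hvd[OF sp, unfolded psx_def[symmetric]]
         px_hvd[OF sps(1), unfolded pstx_def[symmetric]] px_hvd[OF sps(2), unfolded psxx_def[symmetric]]
         px_hvd[OF se, unfolded e0x_def[symmetric]] refl | force)+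
    apply ((simp add: algebra_simps)?)
    done
  have pxPhi: "px \<Phi> (t0, y) = E y" for y
    unfolding px_def using Dx by (simp add: vector_derivative_at)
  define E2 where "E2 = \<i> * of_real (T2 t0 / 4) * \<psi> (t0, x0) + 2 * \<i> * of_real (T2 t0 * x0 / 4 + c1 t0 / 2) * psx (t0, x0)
     + \<i> * of_real (A t0 x0) * psxx (t0, x0) + of_real (\<rho> t0) * psxx (t0, x0) + e0xx (t0, x0)
     - of_real (T t0) * pstxx (t0, x0) - of_real (T1 t0) * psxx (t0, x0)
     - of_real (T1 t0 * x0 / 2 + chi t0) * psxxx (t0, x0)"
  have Dxx: "(E has_vector_derivative E2) (at x0)"
    unfolding E_def[abs_def] A_def E2_def
    apply (rule derivative_eq_intros px_hvd[OF sp, unfolded psx_def[symmetric]]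
         px_hvd[OF sps(2), unfolded psxx_def[symmetric]] px_hvd[OF sps(3), unfolded pstxx_def[symmetric]]
         px_hvd[OF sps(4), unfolded psxxx_def[symmetric]]
         px_hvd[OF sps(5), unfolded e0xx_def[symmetric]] refl | force)+
    apply ((simp add: algebra_simps)?)
    done
  have pxxPhi: "px (px \<Phi>) (t0, x0) = E2"
    unfolding px_def[of "px \<Phi>"] using Dxx by (simp add: pxPhi vector_derivative_at)
  have Vc': "of_real (T t0) * pt V (t0, x0)
              + of_real (T1 t0 * x0 / 2 + chi t0) * px V (t0, x0)
              + of_real (T1 t0) * V (t0, x0)
            = of_real (T3 t0 * x0\<^sup>2 / 8 + c2 t0 * x0 / 2 + s1 t0)
              - \<i> * of_real (r1 t0) - \<i> / 4 * of_real (T2 t0)"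
    using Vc[of t0 x0] unfolding T1_def T2_def T3_def c1_def c2_def s1_def r1_def .
  have S: "\<i> * pst (t0, x0) + psxx (t0, x0) + V (t0, x0) * \<psi> (t0, x0) = 0"
    using sch unfolding schr_def pst_def psxx_def psx_def .
  have S0: "\<i> * e0t (t0, x0) + e0xx (t0, x0) + V (t0, x0) * \<eta>0 (t0, x0) = 0"
    using s0[of "(t0, x0)"] unfolding schr_def e0t_def e0xx_def e0x_def .
  have "prol_E V tau xi eta \<psi> (t0, x0) =
      (\<i> * of_real (A t0 x0) + of_real (\<rho> t0) - of_real (T1 t0)) *
        (\<i> * pst (t0, x0) + psxx (t0, x0) + V (t0, x0) * \<psi> (t0, x0))
      + (\<i> * e0t (t0, x0) + e0xx (t0, x0) + V (t0, x0) * \<eta>0 (t0, x0))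
      + \<psi> (t0, x0) * ((of_real (T t0) * pt V (t0, x0)
              + of_real (T1 t0 * x0 / 2 + chi t0) * px V (t0, x0)
              + of_real (T1 t0) * V (t0, x0)) - (of_real (T3 t0 * x0\<^sup>2 / 8 + c2 t0 * x0 / 2 + s1 t0)
              - \<i> * of_real (r1 t0) - \<i> / 4 * of_real (T2 t0)))"
    unfolding prol_E_def Let_def \<Phi>_def[symmetric] ptPhi pxxPhi
    unfolding pst_def[symmetric] psx_def[symmetric] pstt_def[symmetric] psxx_def[symmetric]
      pstx_def[symmetric] symm1 symm2 psxxx_def[symmetric]
    unfolding E2_def A_def htau hxi heta T1_def[symmetric] T2_def[symmetric] c1_def[symmetric]
    by (simp add: algebra_simps power2_eq_square) (simp add: field_simps)
  then show ?thesis using Vc' S S0 by simp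
qed

lemma chain_W:
  assumes "smooth G" "(\<gamma> has_vector_derivative v) (at s)"
  shows "((\<lambda>s. G (\<gamma> s)) has_vector_derivative dd G v (\<gamma> s)) (at s)"
proof -
  have "(G has_derivative frechet_derivative G (at (\<gamma> s))) (at (\<gamma> s) within range \<gamma>)"
    using assms(1) smooth_has_derivative has_derivative_at_withinI by blast
  from vector_derivative_diff_chain_within[OF assms(2) this] show ?thesis by (simp add: o_def)
qed

lemma chain_W_real:
  fixes G :: "'a::real_normed_vector \<Rightarrow> real"
  assumes "smooth G" "(\<gamma> has_vector_derivative v) (at s)"
  shows "((\<lambda>s. complex_of_real (G (\<gamma> s))) has_vector_derivative of_real (dd G v (\<gamma> s))) (at s)"
  using chain_W[OF assms] by (intro has_vector_derivative_of_real) (simp add: has_real_derivative_iff_has_vector_derivative)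

lemma pt_eq: "((\<lambda>s. f (s, y)) has_vector_derivative D) (at t) \<Longrightarrow> pt f (t, y) = D"
  by (simp add: pt_def vector_derivative_at)

lemma px_eq: "((\<lambda>y. f (t, y)) has_vector_derivative D) (at y) \<Longrightarrow> px f (t, y) = D"
  by (simp add: px_def vector_derivative_at)

lemma pt_eq_q: "((\<lambda>s. f (s, snd q)) has_vector_derivative D) (at (fst q)) \<Longrightarrow> pt f q = D"
  by (simp add: pt_def vector_derivative_at)

lemma px_eq_q: "((\<lambda>y. f (fst q, y)) has_vector_derivative D) (at (snd q)) \<Longrightarrow> px f q = D"
  by (simp add: px_def vector_derivative_at)

lemma smooth_fst: "smooth fst" by (rule smooth_linear[OF bounded_linear_fst])
lemma smooth_snd: "smooth snd" by (rule smooth_linear[OF bounded_linear_snd])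
lemma smooth_of_real: "smooth (of_real :: real \<Rightarrow> 'a::real_normed_algebra_1)"
  by (rule smooth_linear[OF bounded_linear_of_real])

lemma smooth_test:
  fixes z a c e f :: complex
  shows "smooth (\<lambda>q::real\<times>real. z + a * of_real (fst q - t0) + c * of_real (snd q - x0)
      + e * of_real ((fst q - t0) * (snd q - x0)) + f * of_real ((snd q - x0)\<^sup>2 / 2))"
proof -
  have f1: "smooth (\<lambda>q::real\<times>real. fst q - t0)" by (intro smooth_diff smooth_fst smooth_const)
  have f2: "smooth (\<lambda>q::real\<times>real. snd q - x0)" by (intro smooth_diff smooth_snd smooth_const)
  have o: "smooth (\<lambda>q. complex_of_real (g q))" if "smooth g" for g :: "real \<times> real \<Rightarrow> real"
    using smooth_comp[OF smooth_of_real that] .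
  have f3: "smooth (\<lambda>q::real\<times>real. (fst q - t0) * (snd q - x0))" by (intro smooth_mult f1 f2)
  have f4: "smooth (\<lambda>q::real\<times>real. (snd q - x0)\<^sup>2 / 2)"
    using smooth_mult[OF smooth_mult[OF f2 f2] smooth_const[of "1/2::real"]]
    by (simp add: power2_eq_square)
  show ?thesis
    by (intro smooth_add smooth_mult smooth_const o f1 f2 f3 f4)
qed


lemma chain_W_r:
  fixes G :: "'a::real_normed_vector \<Rightarrow> real"
  assumes "smooth G" "(\<gamma> has_vector_derivative v) (at s)"
  shows "((\<lambda>s. G (\<gamma> s)) has_real_derivative dd G v (\<gamma> s)) (at s)"
  using chain_W[OF assms] by (simp add: has_real_derivative_iff_has_vector_derivative)

lemma lin_dec:
  fixes G :: "real \<times> real \<times> complex \<Rightarrow> 'b::real_normed_vector"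
  assumes "smooth G"
  shows "dd G (0, 1, c + f * of_real r) w = dd G (0, 1, c) w + r *\<^sub>R dd G (0, 0, f) w"
proof -
  have "(0::real, 1::real, c + f * of_real r) = (0, 1, c) + r *\<^sub>R (0, 0, f)"
    by (simp add: scaleR_conv_of_real mult.commute)
  moreover have lin: "linear (\<lambda>v. dd G v w)" using smooth_linear_dd[OF assms] .
  have "dd G ((0, 1, c) + r *\<^sub>R (0, 0, f)) w = dd G (0, 1, c) w + r *\<^sub>R dd G (0, 0, f) w"
    using linear_add[OF lin, of "(0,1,c)" "r *\<^sub>R (0,0,f)"] linear_scale[OF lin, of r "(0,0,f)"] by metis
  ultimately show ?thesis by metis
qed

lemma prol_test:
  fixes tau xi :: "real \<times> real \<times> complex \<Rightarrow> real" and eta :: "real \<times> real \<times> complex \<Rightarrow> complex"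
    and z a c e f :: complex and V :: "real \<times> real \<Rightarrow> complex" and t0 x0 :: real
  assumes st: "smooth tau" and sx: "smooth xi" and se: "smooth eta"
  defines "\<psi> \<equiv> (\<lambda>q::real\<times>real. z + a * of_real (fst q - t0) + c * of_real (snd q - x0)
      + e * of_real ((fst q - t0) * (snd q - x0)) + f * of_real ((snd q - x0)\<^sup>2 / 2))"
  shows "smooth \<psi>"
    and "schr V \<psi> (t0, x0) = \<i> * a + f + V (t0, x0) * z"
    and "prol_E V tau xi eta \<psi> (t0, x0) =
      \<i> * (dd eta (1, 0, a) (t0, x0, z) - of_real (dd tau (1, 0, a) (t0, x0, z)) * a
            - of_real (dd xi (1, 0, a) (t0, x0, z)) * c)
      + ((dd (\<lambda>w'. dd eta (0, 1, c) w') (0, 1, c) (t0, x0, z) + dd eta (0, 0, f) (t0, x0, z))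
         - of_real (dd (\<lambda>w'. dd tau (0, 1, c) w') (0, 1, c) (t0, x0, z) + dd tau (0, 0, f) (t0, x0, z)) * a
         - 2 * e * of_real (dd tau (0, 1, c) (t0, x0, z))
         - of_real (dd (\<lambda>w'. dd xi (0, 1, c) w') (0, 1, c) (t0, x0, z) + dd xi (0, 0, f) (t0, x0, z)) * c
         - 2 * f * of_real (dd xi (0, 1, c) (t0, x0, z)))
      + (of_real (tau (t0, x0, z)) * pt V (t0, x0) + of_real (xi (t0, x0, z)) * px V (t0, x0)) * z
      + V (t0, x0) * eta (t0, x0, z)"
proof -
  show sp: "smooth \<psi>" unfolding \<psi>_def by (rule smooth_test)
  have p0: "\<psi> (t0, x0) = z" unfolding \<psi>_def by simp
  have Dps_t: "((\<lambda>s. \<psi> (s, y)) has_vector_derivative a + e * of_real (y - x0)) (at s)" for s y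
    unfolding \<psi>_def fst_conv snd_conv by (rule derivative_eq_intros refl | force)+
  have Dps_x: "((\<lambda>y. \<psi> (s, y)) has_vector_derivative c + e * of_real (s - t0) + f * of_real (y - x0)) (at y)" for s y
    unfolding \<psi>_def fst_conv snd_conv by (rule derivative_eq_intros refl | force)+
  have pt1: "pt \<psi> = (\<lambda>q. a + e * of_real (snd q - x0))"
    by (rule ext, metis pt_eq Dps_t prod.collapse)
  have px1: "px \<psi> = (\<lambda>q. c + e * of_real (fst q - t0) + f * of_real (snd q - x0))"
    by (rule ext, metis px_eq Dps_x prod.collapse)
  have ptpt: "pt (pt \<psi>) = (\<lambda>q. 0)"
    unfolding pt1 by (rule ext, rule pt_eq_q, simp only: fst_conv snd_conv, (rule derivative_eq_intros refl | force)+)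
  have pxpt: "px (pt \<psi>) = (\<lambda>q. e)"
    unfolding pt1 by (rule ext, rule px_eq_q, simp only: fst_conv snd_conv, (rule derivative_eq_intros refl | force)+)
  have ptpx: "pt (px \<psi>) = (\<lambda>q. e)"
    unfolding px1 by (rule ext, rule pt_eq_q, simp only: fst_conv snd_conv, (rule derivative_eq_intros refl | force)+)
  have pxpx: "px (px \<psi>) = (\<lambda>q. f)"
    unfolding px1 by (rule ext, rule px_eq_q, simp only: fst_conv snd_conv, (rule derivative_eq_intros refl | force)+)
  have const0: "pt (\<lambda>q. k) = (\<lambda>q. 0)" "px (\<lambda>q. k) = (\<lambda>q. 0)" for k :: complex
    by (auto simp: pt_def px_def)
  show "schr V \<psi> (t0, x0) = \<i> * a + f + V (t0, x0) * z"
    unfolding schr_def pt1 pxpx p0 by simp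
  define w where "w = (t0, x0, z)"
  define \<Phi> where "\<Phi> = charact tau xi eta \<psi>"
  have \<Phi>eq: "\<Phi> (s, y) = eta (s, y, \<psi> (s, y)) - of_real (tau (s, y, \<psi> (s, y))) * (a + e * of_real (y - x0))
     - of_real (xi (s, y, \<psi> (s, y))) * (c + e * of_real (s - t0) + f * of_real (y - x0))" for s y
    unfolding \<Phi>_def charact_def pt1 px1 by simp
  define \<gamma>t where "\<gamma>t s = (s, x0, \<psi> (s, x0))" for s
  define \<gamma>x where "\<gamma>x y = (t0, y, \<psi> (t0, y))" for y
  have gt0: "\<gamma>t t0 = w" and gx0: "\<gamma>x x0 = w" unfolding \<gamma>t_def \<gamma>x_def w_def p0 by simp_all
  have Dgt: "(\<gamma>t has_vector_derivative (1, 0, a)) (at s)" for s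
  proof -
    have "(\<gamma>t has_vector_derivative (1, 0, a + e * of_real (x0 - x0))) (at s)"
      unfolding \<gamma>t_def by (intro has_vector_derivative_Pair has_vector_derivative_id has_vector_derivative_const Dps_t)
    then show ?thesis by simp
  qed
  have Dgx: "(\<gamma>x has_vector_derivative (0, 1, c + f * of_real (y - x0))) (at y)" for y
  proof -
    have "(\<gamma>x has_vector_derivative (0, 1, c + e * of_real (t0 - t0) + f * of_real (y - x0))) (at y)"
      unfolding \<gamma>x_def by (intro has_vector_derivative_Pair has_vector_derivative_id has_vector_derivative_const Dps_x)
    then show ?thesis by simp
  qed
  have Phit: "(\<lambda>s. \<Phi> (s, x0)) = (\<lambda>s. eta (\<gamma>t s) - of_real (tau (\<gamma>t s)) * a - of_real (xi (\<gamma>t s)) * (c + e * of_real (s - t0)))"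
    unfolding \<Phi>eq \<gamma>t_def by simp
  have ptPhi: "pt \<Phi> (t0, x0) = dd eta (1, 0, a) w - of_real (dd tau (1, 0, a) w) * a
      - (of_real (dd xi (1, 0, a) w) * c + of_real (xi w) * e)"
  proof -
    have "((\<lambda>s. eta (\<gamma>t s) - of_real (tau (\<gamma>t s)) * a - of_real (xi (\<gamma>t s)) * (c + e * of_real (s - t0)))
       has_vector_derivative (dd eta (1, 0, a) w - of_real (dd tau (1, 0, a) w) * a
      - (of_real (dd xi (1, 0, a) w) * c + of_real (xi w) * e))) (at t0)"
      by (rule derivative_eq_intros chain_W[OF se Dgt] chain_W_real[OF st Dgt] chain_W_real[OF sx Dgt] refl
          | simp add: gt0)+
    then show ?thesis unfolding pt_def using Phit by (simp add: vector_derivative_at)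
  qed
  have Dgx0: "(\<gamma>x has_vector_derivative (0, 1, c)) (at x0)" using Dgx[of x0] by simp
  have Phix: "(\<lambda>y. \<Phi> (t0, y)) = (\<lambda>y. eta (\<gamma>x y) - of_real (tau (\<gamma>x y)) * (a + e * of_real (y - x0))
      - of_real (xi (\<gamma>x y)) * (c + f * of_real (y - x0)))"
    unfolding \<Phi>eq \<gamma>x_def by simp
  define E where "E y = dd eta (0, 1, c + f * of_real (y - x0)) (\<gamma>x y)
     - (of_real (dd tau (0, 1, c + f * of_real (y - x0)) (\<gamma>x y)) * (a + e * of_real (y - x0)) + of_real (tau (\<gamma>x y)) * e)
     - (of_real (dd xi (0, 1, c + f * of_real (y - x0)) (\<gamma>x y)) * (c + f * of_real (y - x0)) + of_real (xi (\<gamma>x y)) * f)" for y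
  have pxPhi: "px \<Phi> (t0, y) = E y" for y
  proof -
    have "((\<lambda>y. eta (\<gamma>x y) - of_real (tau (\<gamma>x y)) * (a + e * of_real (y - x0))
      - of_real (xi (\<gamma>x y)) * (c + f * of_real (y - x0))) has_vector_derivative E y) (at y)"
      unfolding E_def
      by (rule derivative_eq_intros chain_W[OF se Dgx] chain_W_real[OF st Dgx] chain_W_real[OF sx Dgx] refl
          | simp)+
    then show ?thesis unfolding px_def using Phix by (simp add: vector_derivative_at)
  qed
  have E2: "E y = (dd eta (0, 1, c) (\<gamma>x y) + (y - x0) *\<^sub>R dd eta (0, 0, f) (\<gamma>x y))
     - (of_real (dd tau (0, 1, c) (\<gamma>x y) + (y - x0) * dd tau (0, 0, f) (\<gamma>x y)) * (a + e * of_real (y - x0)) + of_real (tau (\<gamma>x y)) * e)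
     - (of_real (dd xi (0, 1, c) (\<gamma>x y) + (y - x0) * dd xi (0, 0, f) (\<gamma>x y)) * (c + f * of_real (y - x0)) + of_real (xi (\<gamma>x y)) * f)" for y
    unfolding E_def lin_dec[OF se] lin_dec[OF st] lin_dec[OF sx] by simp
  define pxx where "pxx = (dd (\<lambda>w'. dd eta (0, 1, c) w') (0, 1, c) w + dd eta (0, 0, f) w)
         - of_real (dd (\<lambda>w'. dd tau (0, 1, c) w') (0, 1, c) w + dd tau (0, 0, f) w) * a
         - 2 * e * of_real (dd tau (0, 1, c) w)
         - of_real (dd (\<lambda>w'. dd xi (0, 1, c) w') (0, 1, c) w + dd xi (0, 0, f) w) * c
         - 2 * f * of_real (dd xi (0, 1, c) w)"
  have "(E has_vector_derivative pxx) (at x0)"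
    unfolding E2[abs_def] pxx_def
    apply (rule derivative_eq_intros chain_W[OF smooth_dd[OF se] Dgx0] chain_W_r[OF smooth_dd[OF st] Dgx0]
        chain_W_r[OF smooth_dd[OF sx] Dgx0] chain_W_real[OF st Dgx0] chain_W_real[OF sx Dgx0] chain_W_r[OF st Dgx0] chain_W_r[OF sx Dgx0] refl | simp add: gx0)+
    apply ((simp add: algebra_simps)?)
    done
  then have pxxPhi: "px (px \<Phi>) (t0, x0) = pxx"
    unfolding px_def[of "px \<Phi>"] using pxPhi by (simp add: vector_derivative_at)
  have ppp: "pt (px (px \<psi>)) (t0, x0) = 0" "px (px (px \<psi>)) (t0, x0) = 0"
    unfolding pxpx const0 by simp_all
  show "prol_E V tau xi eta \<psi> (t0, x0) =
      \<i> * (dd eta (1, 0, a) (t0, x0, z) - of_real (dd tau (1, 0, a) (t0, x0, z)) * a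
            - of_real (dd xi (1, 0, a) (t0, x0, z)) * c)
      + ((dd (\<lambda>w'. dd eta (0, 1, c) w') (0, 1, c) (t0, x0, z) + dd eta (0, 0, f) (t0, x0, z))
         - of_real (dd (\<lambda>w'. dd tau (0, 1, c) w') (0, 1, c) (t0, x0, z) + dd tau (0, 0, f) (t0, x0, z)) * a
         - 2 * e * of_real (dd tau (0, 1, c) (t0, x0, z))
         - of_real (dd (\<lambda>w'. dd xi (0, 1, c) w') (0, 1, c) (t0, x0, z) + dd xi (0, 0, f) (t0, x0, z)) * c
         - 2 * f * of_real (dd xi (0, 1, c) (t0, x0, z)))
      + (of_real (tau (t0, x0, z)) * pt V (t0, x0) + of_real (xi (t0, x0, z)) * px V (t0, x0)) * z
      + V (t0, x0) * eta (t0, x0, z)"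
    unfolding prol_E_def Let_def \<Phi>_def[symmetric] ptPhi pxxPhi ppp p0
    unfolding ptpt pxpt const0 w_def[symmetric] pxx_def
    by (simp add: algebra_simps w_def)
qed

definition Pform where
  "Pform V tau xi eta t0 x0 z a c e f =
      \<i> * (dd eta (1, 0, a) (t0, x0, z) - of_real (dd tau (1, 0, a) (t0, x0, z)) * a
            - of_real (dd xi (1, 0, a) (t0, x0, z)) * c)
      + ((dd (\<lambda>w'. dd eta (0, 1, c) w') (0, 1, c) (t0, x0, z) + dd eta (0, 0, f) (t0, x0, z))
         - of_real (dd (\<lambda>w'. dd tau (0, 1, c) w') (0, 1, c) (t0, x0, z) + dd tau (0, 0, f) (t0, x0, z)) * a
         - 2 * e * of_real (dd tau (0, 1, c) (t0, x0, z))
         - of_real (dd (\<lambda>w'. dd xi (0, 1, c) w') (0, 1, c) (t0, x0, z) + dd xi (0, 0, f) (t0, x0, z)) * c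
         - 2 * f * of_real (dd xi (0, 1, c) (t0, x0, z)))
      + (of_real (tau (t0, x0, z)) * pt V (t0, x0) + of_real (xi (t0, x0, z)) * px V (t0, x0)) * z
      + V (t0, x0) * eta (t0, x0, z)"

lemma fwd_P:
  assumes "in_lie_alg V tau xi eta"
  shows "Pform V tau xi eta t0 x0 z a c e (- \<i> * a - V (t0, x0) * z) = 0"
proof -
  have st: "smooth tau" and sx: "smooth xi" and se: "smooth eta"
    and H: "\<And>\<psi> p. smooth \<psi> \<Longrightarrow> schr V \<psi> p = 0 \<Longrightarrow> prol_E V tau xi eta \<psi> p = 0"
    using assms unfolding in_lie_alg_def by auto
  note T1 = prol_test(1)[OF st sx se, of z a t0 c x0 e "- \<i> * a - V (t0, x0) * z"]
  note T2 = prol_test(2)[OF st sx se, of V z a t0 c x0 e "- \<i> * a - V (t0, x0) * z"]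
  note T3 = prol_test(3)[OF st sx se, of V z a t0 c x0 e "- \<i> * a - V (t0, x0) * z"]
  have "schr V (\<lambda>q. z + a * complex_of_real (fst q - t0) + c * complex_of_real (snd q - x0) +
            e * complex_of_real ((fst q - t0) * (snd q - x0)) +
            (- \<i> * a - V (t0, x0) * z) * complex_of_real ((snd q - x0)\<^sup>2 / 2)) (t0, x0) = 0"
    unfolding T2 by simp
  from H[OF T1 this] show ?thesis unfolding T3 Pform_def .
qed

lemma line_integrate2:
  fixes F :: "'a::real_normed_vector \<Rightarrow> 'b::real_normed_vector"
  assumes "smooth F" "\<And>s. dd F v (w + s *\<^sub>R v) = ka + s *\<^sub>R kb"
  shows "F (w + v) = F w + ka + (1/2) *\<^sub>R kb"
proof -
  define g where "g s = F (w + s *\<^sub>R v) - s *\<^sub>R ka - (s * s / 2) *\<^sub>R kb" for s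
  have "(g has_derivative (\<lambda>h. 0)) (at s within UNIV)" for s
  proof -
    have d1: "((\<lambda>s. F (w + s *\<^sub>R v)) has_vector_derivative dd F v (w + s *\<^sub>R v)) (at s)"
      by (rule line_deriv[OF smooth_differentiable[OF assms(1)]])
    have d2: "((\<lambda>s. s *\<^sub>R ka) has_vector_derivative ka) (at s)"
      by (rule derivative_eq_intros refl | force)+
    have d3: "((\<lambda>s. (s * s / 2) *\<^sub>R kb) has_vector_derivative s *\<^sub>R kb) (at s)"
      by (rule derivative_eq_intros refl | force)+
    have "(g has_vector_derivative (dd F v (w + s *\<^sub>R v) - ka - s *\<^sub>R kb)) (at s)"
      unfolding g_def by (intro has_vector_derivative_diff d1 d2 d3)
    then show ?thesis using assms(2) by (simp add: has_vector_derivative_def)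
  qed
  from has_derivative_zero_unique[OF convex_UNIV this, of 1 0]
  show ?thesis unfolding g_def by (simp add: algebra_simps)
qed

lemma line_integrate:
  fixes F :: "'a::real_normed_vector \<Rightarrow> 'b::real_normed_vector"
  assumes "smooth F" "\<And>s. dd F v (w + s *\<^sub>R v) = k"
  shows "F (w + v) = F w + k"
  using line_integrate2[OF assms(1), where v=v and w=w and ka=k and kb=0] assms(2) by simp

lemma dd_expand:
  fixes G :: "real \<times> real \<times> complex \<Rightarrow> 'b::real_normed_vector"
  assumes "smooth G"
  shows "dd G (\<alpha>, \<beta>, u) w = \<alpha> *\<^sub>R dd G (1, 0, 0) w + \<beta> *\<^sub>R dd G (0, 1, 0) w
     + Re u *\<^sub>R dd G (0, 0, 1) w + Im u *\<^sub>R dd G (0, 0, \<i>) w"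
proof -
  have lin: "linear (\<lambda>v. dd G v w)" using smooth_linear_dd[OF assms] .
  have e: "(\<alpha>, \<beta>, u) = \<alpha> *\<^sub>R (1, 0, 0) + \<beta> *\<^sub>R (0, 1, 0) + Re u *\<^sub>R (0, 0, 1) + Im u *\<^sub>R (0::real, 0::real, \<i>)"
    by (simp add: complex_eq_iff)
  show ?thesis
    apply (subst e)
    apply (simp only: linear_add[OF lin] linear_scale[OF lin])
    done
qed

lemma dd_expand_c:
  fixes G :: "real \<times> real \<times> complex \<Rightarrow> complex"
  assumes "smooth G"
  shows "dd G (\<alpha>, \<beta>, u) w = of_real \<alpha> * dd G (1, 0, 0) w + of_real \<beta> * dd G (0, 1, 0) w
     + of_real (Re u) * dd G (0, 0, 1) w + of_real (Im u) * dd G (0, 0, \<i>) w"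
  using dd_expand[OF assms, of w \<alpha> \<beta> u] by (simp add: scaleR_conv_of_real)

lemma dd_expand_r:
  fixes G :: "real \<times> real \<times> complex \<Rightarrow> real"
  assumes "smooth G"
  shows "dd G (\<alpha>, \<beta>, u) w = \<alpha> * dd G (1, 0, 0) w + \<beta> * dd G (0, 1, 0) w
     + Re u * dd G (0, 0, 1) w + Im u * dd G (0, 0, \<i>) w"
  using dd_expand[OF assms, of w \<alpha> \<beta> u] by simp


lemma zero_dir_real:
  fixes G :: "real \<times> real \<times> complex \<Rightarrow> real"
  assumes sG: "smooth G" and h: "\<And>c w. dd G (0, 1, c) w = 0"
  shows "dd G (0, x, z) w = 0"
proof -
  have a: "dd G (0, 1, 0) w = 0" using h .
  have b: "dd G (0, 0, 1) w = 0" using h[where c=1 and w=w] a dd_expand_r[OF sG, of w 0 1 1] by simp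
  have c: "dd G (0, 0, \<i>) w = 0" using h[where c=\<i> and w=w] a dd_expand_r[OF sG, of w 0 1 \<i>] by simp
  show ?thesis using a b c dd_expand_r[OF sG, of w 0 x z] by simp
qed

lemma step1:
  assumes L: "in_lie_alg V tau xi eta"
  shows "dd tau (0, 1, c) w = 0"
proof -
  obtain t0 x0 z where w: "w = (t0, x0, z)" by (metis prod.collapse)
  define f where "f = - \<i> * 0 - V (t0, x0) * z"
  have "Pform V tau xi eta t0 x0 z 0 c 1 f - Pform V tau xi eta t0 x0 z 0 c 0 f
      = - 2 * of_real (dd tau (0, 1, c) (t0, x0, z))"
    unfolding Pform_def by (simp add: algebra_simps)
  then have "of_real (dd tau (0, 1, c) (t0, x0, z)) = (0::complex)"
    using fwd_P[OF L, of t0 x0 z 0 c 1] fwd_P[OF L, of t0 x0 z 0 c 0] unfolding f_def by simp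
  then show ?thesis unfolding w by simp
qed

lemma tau_form:
  assumes L: "in_lie_alg V tau xi eta"
  shows "tau = (\<lambda>w. tau (fst w, 0, 0))"
proof
  fix w :: "real \<times> real \<times> complex"
  obtain t x z where w: "w = (t, x, z)" by (metis prod.collapse)
  have st: "smooth tau" using L unfolding in_lie_alg_def by auto
  have "tau ((t, 0, 0) + (0, x, z)) = tau (t, 0, 0) + 0"
    by (rule line_integrate[OF st]) (rule zero_dir_real[OF st step1[OF L]])
  then show "tau w = tau (fst w, 0, 0)" unfolding w by simp
qed

lemma smooth_t00: "smooth (\<lambda>t::real. (t, 0::real, 0::complex))"
  by (rule smooth_linear) (intro bounded_linear_Pair bounded_linear_ident bounded_linear_zero)

lemma dd_fst_comp:
  fixes T :: "real \<Rightarrow> real"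
  assumes "smooth T"
  shows "dd (\<lambda>w::real \<times> real \<times> complex. T (fst w)) v w = fst v * deriv T (fst w)"
proof -
  have "((\<lambda>w::real \<times> real \<times> complex. T (fst w)) has_derivative (\<lambda>v. fst v * deriv T (fst w))) (at w)"
    by (rule DERIV_compose_FDERIV[OF smooth_real_deriv(1)[OF assms]]) (rule has_derivative_fst[OF has_derivative_ident])
  then show ?thesis by (rule fd_eq)
qed


lemma dd_tau:
  assumes L: "in_lie_alg V tau xi eta"
  shows "dd tau v w = fst v * deriv (\<lambda>t. tau (t, 0, 0)) (fst w)"
proof -
  have st: "smooth tau" using L unfolding in_lie_alg_def by auto
  have sT: "smooth (\<lambda>t. tau (t, 0, 0))" by (rule smooth_comp[OF st smooth_t00])
  have "dd tau v w = dd (\<lambda>w. tau (fst w, 0, 0)) v w" using tau_form[OF L] by metis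
  also have "\<dots> = fst v * deriv (\<lambda>t. tau (t, 0, 0)) (fst w)" by (rule dd_fst_comp[OF sT])
  finally show ?thesis .
qed

lemma step2_raw:
  fixes t0 x0 :: real and z c :: complex
  assumes L: "in_lie_alg V tau xi eta"
  defines "w \<equiv> (t0, x0, z)"
  shows "2 * (dd eta (0, 0, 1) w + \<i> * dd eta (0, 0, \<i>) w)
           - 2 * c * (of_real (dd xi (0, 0, 1) w) + \<i> * of_real (dd xi (0, 0, \<i>) w)) = 0"
    and "2 * of_real (deriv (\<lambda>t. tau (t, 0, 0)) t0)
           - 4 * of_real (dd xi (0, 1, 0) w + Re c * dd xi (0, 0, 1) w + Im c * dd xi (0, 0, \<i>) w) = (0::complex)"
proof -
  have st: "smooth tau" and sx: "smooth xi" and se: "smooth eta"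
    using L unfolding in_lie_alg_def by auto
  define PP where "PP a = Pform V tau xi eta t0 x0 z a c 0 (- \<i> * a - V (t0, x0) * z)" for a
  have PP0: "PP a = 0" for a unfolding PP_def by (rule fwd_P[OF L])
  define \<eta>t where "\<eta>t = dd eta (1, 0, 0) w"
  define \<eta>r where "\<eta>r = dd eta (0, 0, 1) w"
  define \<eta>i where "\<eta>i = dd eta (0, 0, \<i>) w"
  define \<xi>t where "\<xi>t = dd xi (1, 0, 0) w"
  define \<xi>x where "\<xi>x = dd xi (0, 1, 0) w"
  define \<xi>r where "\<xi>r = dd xi (0, 0, 1) w"
  define \<xi>i where "\<xi>i = dd xi (0, 0, \<i>) w"
  have he1: "dd eta (1, 0, a) (t0, x0, z) = \<eta>t + of_real (Re a) * \<eta>r + of_real (Im a) * \<eta>i" for a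
    using dd_expand_c[OF se, of w 1 0 a] unfolding \<eta>t_def \<eta>r_def \<eta>i_def w_def by simp
  have he2: "dd eta (0, 0, f) (t0, x0, z) = of_real (Re f) * \<eta>r + of_real (Im f) * \<eta>i" for f
    using dd_expand_c[OF se, of w 0 0 f] unfolding \<eta>t_def \<eta>r_def \<eta>i_def w_def by simp
  have hx1: "dd xi (1, 0, a) (t0, x0, z) = \<xi>t + Re a * \<xi>r + Im a * \<xi>i" for a
    using dd_expand_r[OF sx, of w 1 0 a] unfolding \<xi>t_def \<xi>r_def \<xi>i_def w_def by simp
  have hx2: "dd xi (0, 0, f) (t0, x0, z) = Re f * \<xi>r + Im f * \<xi>i" for f
    using dd_expand_r[OF sx, of w 0 0 f] unfolding \<xi>r_def \<xi>i_def w_def by simp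
  have hx3: "dd xi (0, 1, c) (t0, x0, z) = \<xi>x + Re c * \<xi>r + Im c * \<xi>i"
    using dd_expand_r[OF sx, of w 0 1 c] unfolding \<xi>x_def \<xi>r_def \<xi>i_def w_def by simp
  note ht = dd_tau[OF L]
  have "PP \<i> - PP 0 - \<i> * (PP 1 - PP 0) = 2 * (\<eta>r + \<i> * \<eta>i) - 2 * c * (of_real \<xi>r + \<i> * of_real \<xi>i)"
    unfolding PP_def Pform_def he1 he2 hx1 hx2 hx3 ht
    by (simp add: algebra_simps)
  then show "2 * (dd eta (0, 0, 1) w + \<i> * dd eta (0, 0, \<i>) w)
           - 2 * c * (of_real (dd xi (0, 0, 1) w) + \<i> * of_real (dd xi (0, 0, \<i>) w)) = 0"
    unfolding \<eta>r_def \<eta>i_def \<xi>r_def \<xi>i_def using PP0 by simp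
  have "PP \<i> - PP 0 + \<i> * (PP 1 - PP 0) = 2 * of_real (deriv (\<lambda>t. tau (t, 0, 0)) t0)
           - 4 * of_real (\<xi>x + Re c * \<xi>r + Im c * \<xi>i)"
    unfolding PP_def Pform_def he1 he2 hx1 hx2 hx3 ht
    by (simp add: algebra_simps)
  then show "2 * of_real (deriv (\<lambda>t. tau (t, 0, 0)) t0)
           - 4 * of_real (dd xi (0, 1, 0) w + Re c * dd xi (0, 0, 1) w + Im c * dd xi (0, 0, \<i>) w) = (0::complex)"
    unfolding \<xi>x_def \<xi>r_def \<xi>i_def using PP0 by simp
qed


lemma step2:
  assumes L: "in_lie_alg V tau xi eta"
  shows "dd eta (0, 0, \<i>) w = \<i> * dd eta (0, 0, 1) w"
    and "dd xi (0, 0, 1) w = 0" and "dd xi (0, 0, \<i>) w = 0"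
    and "dd xi (0, 1, 0) w = deriv (\<lambda>t. tau (t, 0, 0)) (fst w) / 2"
proof -
  obtain t0 x0 z where w: "w = (t0, x0, z)" by (metis prod.collapse)
  have A: "dd eta (0, 0, 1) w + \<i> * dd eta (0, 0, \<i>) w = 0"
    using step2_raw(1)[OF L, of t0 x0 z 0] unfolding w by (simp del: distrib_left_numeral)
  then have "\<i> * (dd eta (0, 0, 1) w + \<i> * dd eta (0, 0, \<i>) w) = 0" by simp
  then show "dd eta (0, 0, \<i>) w = \<i> * dd eta (0, 0, 1) w" by (simp add: algebra_simps)
  have "of_real (dd xi (0, 0, 1) w) + \<i> * of_real (dd xi (0, 0, \<i>) w) = (0::complex)"
    using step2_raw(1)[OF L, of t0 x0 z 1] A unfolding w by (simp del: distrib_left_numeral)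
  then show B: "dd xi (0, 0, 1) w = 0" "dd xi (0, 0, \<i>) w = 0" by (simp_all add: complex_eq_iff)
  have "2 * of_real (deriv (\<lambda>t. tau (t, 0, 0)) t0) - 4 * of_real (dd xi (0, 1, 0) w) = (0::complex)"
    using step2_raw(2)[OF L, of t0 x0 z 0] unfolding w by simp
  then have "complex_of_real (2 * deriv (\<lambda>t. tau (t, 0, 0)) t0 - 4 * dd xi (0, 1, 0) w) = 0"
    by simp
  then have "2 * deriv (\<lambda>t. tau (t, 0, 0)) t0 - 4 * dd xi (0, 1, 0) w = 0"
    by (simp only: of_real_eq_0_iff)
  then show "dd xi (0, 1, 0) w = deriv (\<lambda>t. tau (t, 0, 0)) (fst w) / 2" unfolding w by simp
qed

lemma xi_form:
  assumes L: "in_lie_alg V tau xi eta"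
  shows "xi (t, x, z) = deriv (\<lambda>t. tau (t, 0, 0)) t * x / 2 + xi (t, 0, 0)"
proof -
  have sx: "smooth xi" using L unfolding in_lie_alg_def by auto
  have d: "dd xi (0, x, z) w' = x * deriv (\<lambda>t. tau (t, 0, 0)) (fst w') / 2" for w'
    using dd_expand_r[OF sx, of w' 0 x z] step2(2,3,4)[OF L, of w'] by simp
  have "xi ((t, 0, 0) + (0, x, z)) = xi (t, 0, 0) + x * deriv (\<lambda>t. tau (t, 0, 0)) t / 2"
    by (rule line_integrate[OF sx]) (simp add: d)
  then show ?thesis by (simp add: algebra_simps)
qed


lemma dd_via_line:
  assumes "smooth F" "((\<lambda>s. F (w + s *\<^sub>R v)) has_vector_derivative D) (at 0)"
  shows "dd F v w = D"
proof -
  have "((\<lambda>s. F (w + s *\<^sub>R v)) has_vector_derivative dd F v (w + 0 *\<^sub>R v)) (at 0)"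
    by (rule line_deriv[OF smooth_differentiable[OF assms(1)]])
  then show ?thesis using vector_derivative_unique_at[OF _ assms(2)] by simp
qed

lemma dd_cmul:
  fixes g :: "'a::real_normed_vector \<Rightarrow> complex"
  assumes "smooth g"
  shows "dd (\<lambda>w. u * g w) v w = u * dd g v w"
  using smooth_has_derivative[OF assms] by (intro fd_eq has_derivative_mult_right)

lemma dd_add_cmul:
  fixes f g :: "'a::real_normed_vector \<Rightarrow> complex"
  assumes "smooth f" "smooth g"
  shows "dd (\<lambda>w. f w + u * g w) v w = dd f v w + u * dd g v w"
  using smooth_has_derivative[OF assms(1)] smooth_has_derivative[OF assms(2)]
  by (intro fd_eq has_derivative_add has_derivative_mult_right)

lemma eta_dir:
  assumes L: "in_lie_alg V tau xi eta"
  shows "dd eta (0, 0, u) w = u * dd eta (0, 0, 1) w"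
proof -
  have se: "smooth eta" using L unfolding in_lie_alg_def by auto
  show ?thesis using dd_expand_c[OF se, of w 0 0 u] step2(1)[OF L, of w]
    by (simp add: algebra_simps complex_eq_iff)
qed

lemma eta_dir2:
  assumes L: "in_lie_alg V tau xi eta"
  shows "dd eta (0, \<beta>, u) w = of_real \<beta> * dd eta (0, 1, 0) w + u * dd eta (0, 0, 1) w"
proof -
  have se: "smooth eta" using L unfolding in_lie_alg_def by auto
  show ?thesis using dd_expand_c[OF se, of w 0 \<beta> u] step2(1)[OF L, of w] dd_expand_c[OF se, of w 0 0 u]
      eta_dir[OF L, of w u]
    by simp
qed


lemma smooths:
  assumes L: "in_lie_alg V tau xi eta"
  shows "smooth tau" "smooth xi" "smooth eta"
    and "smooth (\<lambda>t. tau (t, 0, 0))" "smooth (\<lambda>t. xi (t, 0, 0))"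
    and "smooth (deriv (\<lambda>t. tau (t, 0, 0)))" "smooth (deriv (deriv (\<lambda>t. tau (t, 0, 0))))"
    and "smooth (deriv (\<lambda>t. xi (t, 0, 0)))"
proof -
  show st: "smooth tau" and sx: "smooth xi" and se: "smooth eta" using L unfolding in_lie_alg_def by auto
  show sT: "smooth (\<lambda>t. tau (t, 0, 0))" by (rule smooth_comp[OF st smooth_t00])
  show sC: "smooth (\<lambda>t. xi (t, 0, 0))" by (rule smooth_comp[OF sx smooth_t00])
  show "smooth (deriv (\<lambda>t. tau (t, 0, 0)))" "smooth (deriv (deriv (\<lambda>t. tau (t, 0, 0))))"
    "smooth (deriv (\<lambda>t. xi (t, 0, 0)))"
    using smooth_real_deriv(2) sT sC by blast+
qed

lemma xi_fun:
  assumes L: "in_lie_alg V tau xi eta"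
  shows "xi = (\<lambda>w. deriv (\<lambda>t. tau (t, 0, 0)) (fst w) * fst (snd w) / 2 + xi (fst w, 0, 0))"
proof
  fix w :: "real \<times> real \<times> complex"
  obtain t x z where w: "w = (t, x, z)" by (metis prod.collapse)
  show "xi w = deriv (\<lambda>t. tau (t, 0, 0)) (fst w) * fst (snd w) / 2 + xi (fst w, 0, 0)"
    unfolding w using xi_form[OF L, of t x z] by simp
qed

lemma xi_derivs:
  assumes L: "in_lie_alg V tau xi eta"
  shows "dd xi (0, 1, c) w = deriv (\<lambda>t. tau (t, 0, 0)) (fst w) / 2"
    and "dd xi (0, 0, u) w = 0"
    and "dd xi (1, 0, 0) w = deriv (deriv (\<lambda>t. tau (t, 0, 0))) (fst w) * fst (snd w) / 2
                             + deriv (\<lambda>t. xi (t, 0, 0)) (fst w)"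
    and "dd (\<lambda>w'. dd xi (0, 1, c) w') (0, 1, c) w = 0"
proof -
  note S = smooths[OF L]
  show a: "dd xi (0, 1, c) w = deriv (\<lambda>t. tau (t, 0, 0)) (fst w) / 2" for c w
    using dd_expand_r[OF S(2), of w 0 1 c] step2(2,3,4)[OF L, of w] by simp
  show "dd xi (0, 0, u) w = 0"
    using dd_expand_r[OF S(2), of w 0 0 u] step2(2,3)[OF L, of w] by simp
  obtain t x z where w: "w = (t, x, z)" by (metis prod.collapse)
  have "((\<lambda>s. xi (w + s *\<^sub>R (1, 0, 0))) has_vector_derivative
      deriv (deriv (\<lambda>t. tau (t, 0, 0))) t * x / 2 + deriv (\<lambda>t. xi (t, 0, 0)) t) (at 0)"
  proof -
    have e: "(\<lambda>s. xi (w + s *\<^sub>R (1, 0, 0))) = (\<lambda>s. deriv (\<lambda>t. tau (t, 0, 0)) (t + s) * x / 2 + xi (t + s, 0, 0))"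
      unfolding w by (subst xi_fun[OF L]) simp
    have d1: "(deriv (\<lambda>t. tau (t, 0, 0)) has_real_derivative deriv (deriv (\<lambda>t. tau (t, 0, 0))) (t + 0)) (at (t + 0))"
      by (rule smooth_real_deriv(1)[OF S(6)])
    have d2: "((\<lambda>t. xi (t, 0, 0)) has_real_derivative deriv (\<lambda>t. xi (t, 0, 0)) (t + 0)) (at (t + 0))"
      by (rule smooth_real_deriv(1)[OF S(5)])
    have "((\<lambda>s. deriv (\<lambda>t. tau (t, 0, 0)) (t + s) * x / 2 + xi (t + s, 0, 0)) has_real_derivative
        deriv (deriv (\<lambda>t. tau (t, 0, 0))) t * x / 2 + deriv (\<lambda>t. xi (t, 0, 0)) t) (at 0)"
      using DERIV_add[OF DERIV_cdivide[OF DERIV_cmult_right[OF DERIV_chain2[OF d1 DERIV_add[OF DERIV_const DERIV_ident]]]]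
                          DERIV_chain2[OF d2 DERIV_add[OF DERIV_const DERIV_ident]]]
      by simp
    then show ?thesis unfolding e by (simp add: has_real_derivative_iff_has_vector_derivative)
  qed
  then show "dd xi (1, 0, 0) w = deriv (deriv (\<lambda>t. tau (t, 0, 0))) (fst w) * fst (snd w) / 2
                             + deriv (\<lambda>t. xi (t, 0, 0)) (fst w)"
    using dd_via_line[OF S(2)] unfolding w by simp
  have "(\<lambda>w'. dd xi (0, 1, c) w') = (\<lambda>w'. (\<lambda>t. deriv (\<lambda>t. tau (t, 0, 0)) t / 2) (fst w'))"
    by (rule ext) (rule a)
  moreover have sm: "smooth (\<lambda>t. deriv (\<lambda>t. tau (t, 0, 0)) t / 2)"
    using smooth_mult[OF S(6) smooth_const[of "1/2::real"]] by simp
  have "dd (\<lambda>w'. (\<lambda>t. deriv (\<lambda>t. tau (t, 0, 0)) t / 2) (fst w')) (0, 1, c) w = 0"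
    using dd_fst_comp[OF sm, where v="(0, 1, c)" and w=w] by simp
  ultimately show "dd (\<lambda>w'. dd xi (0, 1, c) w') (0, 1, c) w = 0"
    by simp
qed


lemma s2eta:
  assumes L: "in_lie_alg V tau xi eta"
  shows "dd (\<lambda>w'. dd eta (0, 1, c) w') (0, 1, c) w =
    dd (\<lambda>w. dd eta (0, 1, 0) w) (0, 1, 0) w + 2 * c * dd (\<lambda>w. dd eta (0, 0, 1) w) (0, 1, 0) w
    + c * c * dd (\<lambda>w. dd eta (0, 0, 1) w) (0, 0, 1) w"
proof -
  note S = smooths[OF L]
  define ex where "ex = (\<lambda>w. dd eta (0, 1, 0) w)"
  define er where "er = (\<lambda>w. dd eta (0, 0, 1) w)"
  have sex: "smooth ex" and ser: "smooth er" unfolding ex_def er_def using smooth_dd[OF S(3)] by blast+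
  have f1: "(\<lambda>w'. dd eta (0, 1, c) w') = (\<lambda>w'. ex w' + c * er w')"
  proof
    fix w' show "dd eta (0, 1, c) w' = ex w' + c * er w'"
      unfolding ex_def er_def using eta_dir2[OF L, of w' 1 c] by simp
  qed
  have f2: "(\<lambda>w. dd eta (0, 0, u) w) = (\<lambda>w. u * er w)" for u
  proof
    fix w' show "dd eta (0, 0, u) w' = u * er w'"
      unfolding er_def using eta_dir[OF L, of w' u] by simp
  qed
  have exu: "dd ex (0, 0, u) w = u * dd er (0, 1, 0) w" for u
  proof -
    have "dd ex (0, 0, u) w = dd (\<lambda>w. dd eta (0, 0, u) w) (0, 1, 0) w"
      unfolding ex_def by (rule sym2[OF S(3)])
    also have "\<dots> = u * dd er (0, 1, 0) w" unfolding f2 by (rule dd_cmul[OF ser])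
    finally show ?thesis .
  qed
  have eru: "dd er (0, 0, u) w = u * dd er (0, 0, 1) w" for u
  proof -
    have "dd er (0, 0, u) w = dd (\<lambda>w. dd eta (0, 0, u) w) (0, 0, 1) w"
      unfolding er_def by (rule sym2[OF S(3)])
    also have "\<dots> = u * dd er (0, 0, 1) w" unfolding f2 by (rule dd_cmul[OF ser])
    finally show ?thesis .
  qed
  have a: "dd ex (0, 1, c) w = dd ex (0, 1, 0) w + c * dd er (0, 1, 0) w"
    using dd_expand_c[OF sex, of w 0 1 c] exu[of 1] exu[of \<i>]
    by (simp add: algebra_simps complex_eq_iff)
  have b: "dd er (0, 1, c) w = dd er (0, 1, 0) w + c * dd er (0, 0, 1) w"
    using dd_expand_c[OF ser, of w 0 1 c] eru[of \<i>]
    by (simp add: algebra_simps complex_eq_iff)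
  have "dd (\<lambda>w'. dd eta (0, 1, c) w') (0, 1, c) w = dd ex (0, 1, c) w + c * dd er (0, 1, c) w"
    unfolding f1 by (rule dd_add_cmul[OF sex ser])
  also have "\<dots> = dd ex (0, 1, 0) w + 2 * c * dd er (0, 1, 0) w + c * c * dd er (0, 0, 1) w"
    unfolding a b by (simp add: algebra_simps)
  finally show ?thesis unfolding ex_def er_def .
qed


lemma step3:
  assumes L: "in_lie_alg V tau xi eta"
  shows "dd (\<lambda>w. dd eta (0, 0, 1) w) (0, 0, 1) w = 0"
    and "2 * dd (\<lambda>w. dd eta (0, 0, 1) w) (0, 1, 0) w = \<i> * of_real (dd xi (1, 0, 0) w)"
proof -
  obtain t0 x0 z where w: "w = (t0, x0, z)" by (metis prod.collapse)
  define P where "P c = Pform V tau xi eta t0 x0 z 0 c 0 (- \<i> * 0 - V (t0, x0) * z)" for c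
  have P0: "P c = 0" for c unfolding P_def by (rule fwd_P[OF L])
  define B where "B = 2 * dd (\<lambda>w. dd eta (0, 0, 1) w) (0, 1, 0) w - \<i> * of_real (dd xi (1, 0, 0) w)"
  define E where "E = dd (\<lambda>w. dd eta (0, 0, 1) w) (0, 0, 1) w"
  have D: "P c - P 0 = c * B + c * c * E" for c
    unfolding P_def Pform_def xi_derivs(4)[OF L] s2eta[OF L, where c=c and w="(t0, x0, z)"] B_def E_def w
    by (simp add: dd_tau[OF L] xi_derivs(1,2)[OF L] algebra_simps)
  have "1 * B + 1 * 1 * E = 0" "(-1) * B + (-1) * (-1) * E = 0"
    using D[of 1] D[of "-1"] P0 by (metis diff_self)+
  then have "E = 0" "B = 0" by (simp_all add: algebra_simps)
  then show "dd (\<lambda>w. dd eta (0, 0, 1) w) (0, 0, 1) w = 0"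
    and "2 * dd (\<lambda>w. dd eta (0, 0, 1) w) (0, 1, 0) w = \<i> * of_real (dd xi (1, 0, 0) w)"
    unfolding E_def B_def by simp_all
qed


lemma er_dir:
  assumes L: "in_lie_alg V tau xi eta"
  shows "dd (\<lambda>w. dd eta (0, 0, 1) w) (0, 0, u) w = u * dd (\<lambda>w. dd eta (0, 0, 1) w) (0, 0, 1) w"
proof -
  note S = smooths[OF L]
  have ser: "smooth (\<lambda>w. dd eta (0, 0, 1) w)" using smooth_dd[OF S(3)] .
  have f2: "(\<lambda>w. dd eta (0, 0, u) w) = (\<lambda>w. u * dd eta (0, 0, 1) w)"
  proof
    fix w' show "dd eta (0, 0, u) w' = u * dd eta (0, 0, 1) w'" using eta_dir[OF L, of w' u] by simp
  qed
  have "dd (\<lambda>w. dd eta (0, 0, 1) w) (0, 0, u) w = dd (\<lambda>w. dd eta (0, 0, u) w) (0, 0, 1) w"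
    by (rule sym2[OF S(3)])
  also have "\<dots> = u * dd (\<lambda>w. dd eta (0, 0, 1) w) (0, 0, 1) w" unfolding f2 by (rule dd_cmul[OF ser])
  finally show ?thesis .
qed

lemma er_form:
  assumes L: "in_lie_alg V tau xi eta"
  shows "dd eta (0, 0, 1) (t, x, z) = dd eta (0, 0, 1) (t, 0, 0)
     + \<i> * of_real (deriv (deriv (\<lambda>t. tau (t, 0, 0))) t * x\<^sup>2 / 8 + deriv (\<lambda>t. xi (t, 0, 0)) t * x / 2)"
proof -
  note S = smooths[OF L]
  have ser: "smooth (\<lambda>w. dd eta (0, 0, 1) w)" using smooth_dd[OF S(3)] .
  define T2 where "T2 = deriv (deriv (\<lambda>t. tau (t, 0, 0)))"
  define C1 where "C1 = deriv (\<lambda>t. xi (t, 0, 0))"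
  have d: "dd (\<lambda>w. dd eta (0, 0, 1) w) (0, x, z) ((t, 0, 0) + s *\<^sub>R (0, x, z))
      = \<i> * of_real (C1 t * x / 2) + s *\<^sub>R (\<i> * of_real (T2 t * x\<^sup>2 / 4))" for s
  proof -
    define w' where "w' = (t, s * x, s *\<^sub>R z)"
    have w'e: "(t, 0, 0) + s *\<^sub>R (0, x, z) = w'" unfolding w'_def by simp
    have e1: "dd (\<lambda>w. dd eta (0, 0, 1) w) (0, 0, 1) w' = 0" by (rule step3(1)[OF L])
    have e2: "dd (\<lambda>w. dd eta (0, 0, 1) w) (0, 0, \<i>) w' = 0" using er_dir[OF L, of w' \<i>] e1 by simp
    have e3: "2 * dd (\<lambda>w. dd eta (0, 0, 1) w) (0, 1, 0) w' = \<i> * of_real (T2 t * (s * x) / 2 + C1 t)"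
      using step3(2)[OF L, of w'] xi_derivs(3)[OF L, of w'] unfolding w'_def T2_def C1_def by simp
    have "dd (\<lambda>w. dd eta (0, 0, 1) w) (0, x, z) w' = of_real x * dd (\<lambda>w. dd eta (0, 0, 1) w) (0, 1, 0) w'"
      using dd_expand_c[OF ser, of w' 0 x z] e1 e2 by simp
    also have "\<dots> = \<i> * of_real (C1 t * x / 2) + s *\<^sub>R (\<i> * of_real (T2 t * x\<^sup>2 / 4))"
      using e3 by (simp add: scaleR_conv_of_real power2_eq_square field_simps)
    finally show ?thesis unfolding w'e .
  qed
  have "dd eta (0, 0, 1) ((t, 0, 0) + (0, x, z)) = dd eta (0, 0, 1) (t, 0, 0) + \<i> * of_real (C1 t * x / 2)
      + (1/2) *\<^sub>R (\<i> * of_real (T2 t * x\<^sup>2 / 4))"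
    by (rule line_integrate2[OF ser d])
  then show ?thesis unfolding T2_def[symmetric] C1_def[symmetric]
    by (simp add: scaleR_conv_of_real field_simps)
qed

lemma eta_form:
  assumes L: "in_lie_alg V tau xi eta"
  shows "eta (t, x, z) = eta (t, x, 0) + z * dd eta (0, 0, 1) (t, x, 0)"
proof -
  note S = smooths[OF L]
  have "eta ((t, x, 0) + (0, 0, z)) = eta (t, x, 0) + z * dd eta (0, 0, 1) (t, x, 0)"
  proof (rule line_integrate[OF S(3)])
    fix s :: real
    have "dd eta (0, 0, z) ((t, x, 0) + s *\<^sub>R (0, 0, z)) = z * dd eta (0, 0, 1) (t, x, s *\<^sub>R z)"
      using eta_dir[OF L, of "(t, x, s *\<^sub>R z)" z] by simp
    also have "\<dots> = z * dd eta (0, 0, 1) (t, x, 0)"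
      using er_form[OF L, of t x "s *\<^sub>R z"] er_form[OF L, of t x 0] by simp
    finally show "dd eta (0, 0, z) ((t, x, 0) + s *\<^sub>R (0, 0, z)) = z * dd eta (0, 0, 1) (t, x, 0)" .
  qed
  then show ?thesis by simp
qed


lemma C0:
  assumes L: "in_lie_alg V tau xi eta"
  shows "\<i> * dd eta (1, 0, 0) (t, x, z) + dd (\<lambda>w. dd eta (0, 1, 0) w) (0, 1, 0) (t, x, z)
    - V (t, x) * z * dd eta (0, 0, 1) (t, x, z) + V (t, x) * z * of_real (deriv (\<lambda>t. tau (t, 0, 0)) t)
    + (of_real (tau (t, x, z)) * pt V (t, x) + of_real (xi (t, x, z)) * px V (t, x)) * z
    + V (t, x) * eta (t, x, z) = 0"
proof -
  have "Pform V tau xi eta t x z 0 0 0 (- \<i> * 0 - V (t, x) * z) = 0" by (rule fwd_P[OF L])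
  then show ?thesis
    unfolding Pform_def xi_derivs(4)[OF L] eta_dir[OF L, of "(t, x, z)" "- \<i> * 0 - V (t, x) * z"]
    by (simp add: dd_tau[OF L] xi_derivs(1,2)[OF L] algebra_simps)
qed

lemma dd_via_line_at:
  assumes "smooth F" "((\<lambda>s. F (w + s *\<^sub>R v)) has_vector_derivative D) (at s0)"
  shows "dd F v (w + s0 *\<^sub>R v) = D"
proof -
  have "((\<lambda>s. F (w + s *\<^sub>R v)) has_vector_derivative dd F v (w + s0 *\<^sub>R v)) (at s0)"
    by (rule line_deriv[OF smooth_differentiable[OF assms(1)]])
  then show ?thesis using vector_derivative_unique_at[OF _ assms(2)] by simp
qed


lemma fwd_main:
  assumes L: "in_lie_alg V tau xi eta"
    and hT: "T = (\<lambda>t. tau (t, 0, 0))" and hC: "C = (\<lambda>t. xi (t, 0, 0))"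
    and hr: "\<rho> = (\<lambda>t. Re (dd eta (0, 0, 1) (t, 0, 0)))" and hs: "\<sigma> = (\<lambda>t. Im (dd eta (0, 0, 1) (t, 0, 0)))"
    and he: "\<eta>0 = (\<lambda>q. eta (fst q, snd q, 0))"
  shows "smooth T" "smooth C" "smooth \<sigma>" "smooth \<rho>" "smooth \<eta>0"
    and "\<And>t x. of_real (T t) * pt V (t, x)
              + of_real (deriv T t * x / 2 + C t) * px V (t, x)
              + of_real (deriv T t) * V (t, x)
            = of_real (deriv (deriv (deriv T)) t * x\<^sup>2 / 8 + deriv (deriv C) t * x / 2 + deriv \<sigma> t)
              - \<i> * of_real (deriv \<rho> t) - \<i> / 4 * of_real (deriv (deriv T) t)"
    and "\<And>p. schr V \<eta>0 p = 0"
    and "\<And>t x z. tau (t, x, z) = T t"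
    and "\<And>t x z. xi (t, x, z) = deriv T t * x / 2 + C t"
    and "\<And>t x z. eta (t, x, z) =
           \<i> * of_real (deriv (deriv T) t * x\<^sup>2 / 8 + deriv C t * x / 2 + \<sigma> t) * z
           + of_real (\<rho> t) * z + \<eta>0 (t, x)"
proof -
  note S = smooths[OF L]
  have ser: "smooth (\<lambda>w. dd eta (0, 0, 1) w)" using smooth_dd[OF S(3)] .
  have ser0: "smooth (\<lambda>t. dd eta (0, 0, 1) (t, 0, 0))" by (rule smooth_comp[OF ser smooth_t00])
  show sT: "smooth T" unfolding hT by (rule S(4))
  show sC: "smooth C" unfolding hC by (rule S(5))
  show ss: "smooth \<sigma>" unfolding hs by (rule smooth_comp[OF smooth_linear[OF bounded_linear_Im] ser0])
  show sr: "smooth \<rho>" unfolding hr by (rule smooth_comp[OF smooth_linear[OF bounded_linear_Re] ser0])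
  have sx0: "smooth (\<lambda>q::real \<times> real. (fst q, snd q, 0::complex))"
    by (rule smooth_linear) (intro bounded_linear_Pair bounded_linear_fst bounded_linear_snd bounded_linear_zero)
  show se0: "smooth \<eta>0" unfolding he by (rule smooth_comp[OF S(3) sx0])
  show tauf: "tau (t, x, z) = T t" for t x z
    using fun_cong[OF tau_form[OF L], of "(t, x, z)"] unfolding hT by simp
  show xif: "xi (t, x, z) = deriv T t * x / 2 + C t" for t x z
    using xi_form[OF L, of t x z] unfolding hT hC by simp
  define T1 where "T1 = deriv T"
  define T2 where "T2 = deriv T1"
  define T3 where "T3 = deriv T2"
  define C1 where "C1 = deriv C"
  define C2 where "C2 = deriv C1"
  define r1 where "r1 = deriv \<rho>"
  define s1 where "s1 = deriv \<sigma>"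
  have sT1: "smooth T1" and sT2: "smooth T2" and sC1: "smooth C1"
    unfolding T1_def T2_def C1_def using smooth_real_deriv(2) sT sC by blast+
  have DT2: "\<And>s. (T2 has_real_derivative T3 s) (at s)" unfolding T3_def using smooth_real_deriv(1)[OF sT2] .
  have DC1: "\<And>s. (C1 has_real_derivative C2 s) (at s)" unfolding C2_def using smooth_real_deriv(1)[OF sC1] .
  have Ds: "\<And>s. (\<sigma> has_real_derivative s1 s) (at s)" unfolding s1_def using smooth_real_deriv(1)[OF ss] .
  have Dr: "\<And>s. (\<rho> has_real_derivative r1 s) (at s)" unfolding r1_def using smooth_real_deriv(1)[OF sr] .
  define Hf where "Hf t x = of_real (\<rho> t) + \<i> * of_real (T2 t * x\<^sup>2 / 8 + C1 t * x / 2 + \<sigma> t)" for t x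
  have er: "dd eta (0, 0, 1) (t, x, z) = Hf t x" for t x z
    using er_form[OF L, of t x z] unfolding Hf_def T2_def T1_def C1_def hT[symmetric] hC[symmetric] hr hs
    by (simp add: complex_eq_iff)
  have etaf: "eta (t, x, z) = \<eta>0 (t, x) + z * Hf t x" for t x z
    using eta_form[OF L, of t x z] er[of t x 0] unfolding he by simp
  show "eta (t, x, z) = \<i> * of_real (deriv (deriv T) t * x\<^sup>2 / 8 + deriv C t * x / 2 + \<sigma> t) * z
           + of_real (\<rho> t) * z + \<eta>0 (t, x)" for t x z
    unfolding etaf Hf_def T2_def T1_def C1_def by (simp add: algebra_simps)
  have eta_line: "(\<lambda>s. eta ((0, x, z) + s *\<^sub>R (1, 0, 0))) = (\<lambda>s. \<eta>0 (s, x) + z * Hf s x)" for x z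
    by (rule ext) (simp add: etaf)
  have ht: "dd eta (1, 0, 0) (t, x, z) = pt \<eta>0 (t, x)
      + z * (of_real (r1 t) + \<i> * of_real (T3 t * x\<^sup>2 / 8 + C2 t * x / 2 + s1 t))" for t x z
  proof -
    have "((\<lambda>s. eta ((0, x, z) + s *\<^sub>R (1, 0, 0))) has_vector_derivative pt \<eta>0 (t, x)
      + z * (of_real (r1 t) + \<i> * of_real (T3 t * x\<^sup>2 / 8 + C2 t * x / 2 + s1 t))) (at t)"
      unfolding eta_line Hf_def
      by (rule derivative_eq_intros pt_hvd[OF se0] DT2 DC1 Ds Dr refl | force)+
    from dd_via_line_at[OF S(3) this] show ?thesis by simp
  qed
  have hx: "dd eta (0, 1, 0) (t, y, z) = px \<eta>0 (t, y) + z * (\<i> * of_real (T2 t * y / 4 + C1 t / 2))" for t y z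
  proof -
    have e: "(\<lambda>s. eta ((t, 0, z) + s *\<^sub>R (0, 1, 0))) = (\<lambda>s. \<eta>0 (t, s) + z * Hf t s)"
      by (rule ext) (simp add: etaf)
    have "((\<lambda>s. eta ((t, 0, z) + s *\<^sub>R (0, 1, 0))) has_vector_derivative
        px \<eta>0 (t, y) + z * (\<i> * of_real (T2 t * y / 4 + C1 t / 2))) (at y)"
      unfolding e Hf_def
      by (rule derivative_eq_intros px_hvd[OF se0] refl | force)+
    from dd_via_line_at[OF S(3) this] show ?thesis by simp
  qed
  have hxx: "dd (\<lambda>w. dd eta (0, 1, 0) w) (0, 1, 0) (t, x, z) = px (px \<eta>0) (t, x) + z * (\<i> * of_real (T2 t / 4))"
    for t x z
  proof -
    have e: "(\<lambda>s. dd eta (0, 1, 0) ((t, 0, z) + s *\<^sub>R (0, 1, 0)))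
        = (\<lambda>s. px \<eta>0 (t, s) + z * (\<i> * of_real (T2 t * s / 4 + C1 t / 2)))"
      by (rule ext) (simp add: hx)
    have "((\<lambda>s. dd eta (0, 1, 0) ((t, 0, z) + s *\<^sub>R (0, 1, 0))) has_vector_derivative
        px (px \<eta>0) (t, x) + z * (\<i> * of_real (T2 t / 4))) (at x)"
      unfolding e
      by (rule derivative_eq_intros px_hvd[OF smooth_px[OF se0]] refl | force)+
    from dd_via_line_at[OF smooth_dd[OF S(3)] this] show ?thesis by simp
  qed
  have T1e: "deriv (\<lambda>t. tau (t, 0, 0)) = T1" unfolding T1_def hT ..
  have c0: "\<i> * pt \<eta>0 (t, x) + px (px \<eta>0) (t, x) + V (t, x) * \<eta>0 (t, x) = 0" for t x
    using C0[OF L, of t x 0] unfolding ht hxx etaf T1e by simp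
  show "schr V \<eta>0 p = 0" for p
    using c0[of "fst p" "snd p"] unfolding schr_def by simp
  show "of_real (T t) * pt V (t, x)
              + of_real (deriv T t * x / 2 + C t) * px V (t, x)
              + of_real (deriv T t) * V (t, x)
            = of_real (deriv (deriv (deriv T)) t * x\<^sup>2 / 8 + deriv (deriv C) t * x / 2 + deriv \<sigma> t)
              - \<i> * of_real (deriv \<rho> t) - \<i> / 4 * of_real (deriv (deriv T) t)" for t x
  proof -
    have c1: "\<i> * (pt \<eta>0 (t, x) + (of_real (r1 t) + \<i> * of_real (T3 t * x\<^sup>2 / 8 + C2 t * x / 2 + s1 t)))
      + (px (px \<eta>0) (t, x) + \<i> * of_real (T2 t / 4))
      - V (t, x) * Hf t x + V (t, x) * of_real (T1 t)
      + (of_real (T t) * pt V (t, x) + of_real (T1 t * x / 2 + C t) * px V (t, x))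
      + V (t, x) * (\<eta>0 (t, x) + Hf t x) = 0"
      using C0[OF L, of t x 1] unfolding ht hxx etaf T1e er tauf xif T1_def by simp
    have "(of_real (T t) * pt V (t, x) + of_real (T1 t * x / 2 + C t) * px V (t, x) + of_real (T1 t) * V (t, x))
        - (of_real (T3 t * x\<^sup>2 / 8 + C2 t * x / 2 + s1 t) - \<i> * of_real (r1 t) - \<i> / 4 * of_real (T2 t))
       = (\<i> * (pt \<eta>0 (t, x) + (of_real (r1 t) + \<i> * of_real (T3 t * x\<^sup>2 / 8 + C2 t * x / 2 + s1 t)))
      + (px (px \<eta>0) (t, x) + \<i> * of_real (T2 t / 4))
      - V (t, x) * Hf t x + V (t, x) * of_real (T1 t)
      + (of_real (T t) * pt V (t, x) + of_real (T1 t * x / 2 + C t) * px V (t, x))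
      + V (t, x) * (\<eta>0 (t, x) + Hf t x))
      - (\<i> * pt \<eta>0 (t, x) + px (px \<eta>0) (t, x) + V (t, x) * \<eta>0 (t, x))"
      by (simp add: algebra_simps)
    from this[unfolded c1 c0[of t x]] have
      "of_real (T t) * pt V (t, x) + of_real (T1 t * x / 2 + C t) * px V (t, x) + of_real (T1 t) * V (t, x)
        = of_real (T3 t * x\<^sup>2 / 8 + C2 t * x / 2 + s1 t) - \<i> * of_real (r1 t) - \<i> / 4 * of_real (T2 t)"
      by simp
    then show ?thesis unfolding T1_def T2_def T3_def C1_def C2_def s1_def r1_def .
  qed
qed

theorem theorem4:
  fixes V :: "real \<times> real \<Rightarrow> complex"
  assumes "smooth V"
  shows "in_lie_alg V tau xi eta \<longleftrightarrow>
    (\<exists>(\<tau>::real \<Rightarrow> real) (chi::real \<Rightarrow> real) (\<sigma>::real \<Rightarrow> real) (\<rho>::real \<Rightarrow> real)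
       (\<eta>0::real \<times> real \<Rightarrow> complex).
       smooth \<tau> \<and> smooth chi \<and> smooth \<sigma> \<and> smooth \<rho> \<and> smooth \<eta>0 \<and>
       (\<forall>t x. of_real (\<tau> t) * pt V (t, x)
              + of_real (deriv \<tau> t * x / 2 + chi t) * px V (t, x)
              + of_real (deriv \<tau> t) * V (t, x)
            = of_real ((deriv ^^ 3) \<tau> t * x\<^sup>2 / 8 + (deriv ^^ 2) chi t * x / 2 + deriv \<sigma> t)
              - \<i> * of_real (deriv \<rho> t) - \<i> / 4 * of_real ((deriv ^^ 2) \<tau> t)) \<and>
       (\<forall>p. schr V \<eta>0 p = 0) \<and>
       (\<forall>t x \<psi>. tau (t, x, \<psi>) = \<tau> t) \<and>
       (\<forall>t x \<psi>. xi (t, x, \<psi>) = deriv \<tau> t * x / 2 + chi t) \<and>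
       (\<forall>t x \<psi>. eta (t, x, \<psi>) =
           \<i> * of_real ((deriv ^^ 2) \<tau> t * x\<^sup>2 / 8 + deriv chi t * x / 2 + \<sigma> t) * \<psi>
           + of_real (\<rho> t) * \<psi> + \<eta>0 (t, x)))"
proof
  assume L: "in_lie_alg V tau xi eta"
  note F = fwd_main[OF L refl refl refl refl refl]
  show "\<exists>(\<tau>::real \<Rightarrow> real) (chi::real \<Rightarrow> real) (\<sigma>::real \<Rightarrow> real) (\<rho>::real \<Rightarrow> real)
       (\<eta>0::real \<times> real \<Rightarrow> complex).
       smooth \<tau> \<and> smooth chi \<and> smooth \<sigma> \<and> smooth \<rho> \<and> smooth \<eta>0 \<and>
       (\<forall>t x. of_real (\<tau> t) * pt V (t, x)
              + of_real (deriv \<tau> t * x / 2 + chi t) * px V (t, x)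
              + of_real (deriv \<tau> t) * V (t, x)
            = of_real ((deriv ^^ 3) \<tau> t * x\<^sup>2 / 8 + (deriv ^^ 2) chi t * x / 2 + deriv \<sigma> t)
              - \<i> * of_real (deriv \<rho> t) - \<i> / 4 * of_real ((deriv ^^ 2) \<tau> t)) \<and>
       (\<forall>p. schr V \<eta>0 p = 0) \<and>
       (\<forall>t x \<psi>. tau (t, x, \<psi>) = \<tau> t) \<and>
       (\<forall>t x \<psi>. xi (t, x, \<psi>) = deriv \<tau> t * x / 2 + chi t) \<and>
       (\<forall>t x \<psi>. eta (t, x, \<psi>) =
           \<i> * of_real ((deriv ^^ 2) \<tau> t * x\<^sup>2 / 8 + deriv chi t * x / 2 + \<sigma> t) * \<psi>
           + of_real (\<rho> t) * \<psi> + \<eta>0 (t, x))"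
    apply (rule exI[of _ "\<lambda>t. tau (t, 0, 0)"], rule exI[of _ "\<lambda>t. xi (t, 0, 0)"],
        rule exI[of _ "\<lambda>t. Im (dd eta (0, 0, 1) (t, 0, 0))"], rule exI[of _ "\<lambda>t. Re (dd eta (0, 0, 1) (t, 0, 0))"],
        rule exI[of _ "\<lambda>q. eta (fst q, snd q, 0)"])
    apply (intro conjI allI)
    apply (unfold deriv_pow_simps)
    apply (rule F)+
    done
next
  assume "\<exists>(\<tau>::real \<Rightarrow> real) (chi::real \<Rightarrow> real) (\<sigma>::real \<Rightarrow> real) (\<rho>::real \<Rightarrow> real)
       (\<eta>0::real \<times> real \<Rightarrow> complex).
       smooth \<tau> \<and> smooth chi \<and> smooth \<sigma> \<and> smooth \<rho> \<and> smooth \<eta>0 \<and>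
       (\<forall>t x. of_real (\<tau> t) * pt V (t, x)
              + of_real (deriv \<tau> t * x / 2 + chi t) * px V (t, x)
              + of_real (deriv \<tau> t) * V (t, x)
            = of_real ((deriv ^^ 3) \<tau> t * x\<^sup>2 / 8 + (deriv ^^ 2) chi t * x / 2 + deriv \<sigma> t)
              - \<i> * of_real (deriv \<rho> t) - \<i> / 4 * of_real ((deriv ^^ 2) \<tau> t)) \<and>
       (\<forall>p. schr V \<eta>0 p = 0) \<and>
       (\<forall>t x \<psi>. tau (t, x, \<psi>) = \<tau> t) \<and>
       (\<forall>t x \<psi>. xi (t, x, \<psi>) = deriv \<tau> t * x / 2 + chi t) \<and>
       (\<forall>t x \<psi>. eta (t, x, \<psi>) =
           \<i> * of_real ((deriv ^^ 2) \<tau> t * x\<^sup>2 / 8 + deriv chi t * x / 2 + \<sigma> t) * \<psi>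
           + of_real (\<rho> t) * \<psi> + \<eta>0 (t, x))"
  then obtain T chi \<sigma> \<rho> \<eta>0 where
    sT: "smooth T" and sc: "smooth chi" and ss: "smooth \<sigma>" and sr: "smooth \<rho>" and se: "smooth \<eta>0"
    and Vc: "\<forall>t x. of_real (T t) * pt V (t, x)
              + of_real (deriv T t * x / 2 + chi t) * px V (t, x)
              + of_real (deriv T t) * V (t, x)
            = of_real ((deriv ^^ 3) T t * x\<^sup>2 / 8 + (deriv ^^ 2) chi t * x / 2 + deriv \<sigma> t)
              - \<i> * of_real (deriv \<rho> t) - \<i> / 4 * of_real ((deriv ^^ 2) T t)"
    and s0: "\<forall>p. schr V \<eta>0 p = 0"
    and ht: "\<forall>t x \<psi>. tau (t, x, \<psi>) = T t"
    and hx: "\<forall>t x \<psi>. xi (t, x, \<psi>) = deriv T t * x / 2 + chi t"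
    and he: "\<forall>t x \<psi>. eta (t, x, \<psi>) =
           \<i> * of_real ((deriv ^^ 2) T t * x\<^sup>2 / 8 + deriv chi t * x / 2 + \<sigma> t) * \<psi>
           + of_real (\<rho> t) * \<psi> + \<eta>0 (t, x)"
    by blast
  have htau: "tau = (\<lambda>(t, x, \<psi>). T t)" using ht by (auto simp: fun_eq_iff)
  have hxi: "xi = (\<lambda>(t, x, \<psi>). deriv T t * x / 2 + chi t)" using hx by (auto simp: fun_eq_iff)
  have heta: "eta = (\<lambda>(t, x, \<psi>). \<i> * of_real (deriv (deriv T) t * x\<^sup>2 / 8 + deriv chi t * x / 2 + \<sigma> t) * \<psi>
           + of_real (\<rho> t) * \<psi> + \<eta>0 (t, x))" using he by (auto simp: fun_eq_iff deriv_pow_simps)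
  have Vc': "\<And>t x. of_real (T t) * pt V (t, x)
              + of_real (deriv T t * x / 2 + chi t) * px V (t, x)
              + of_real (deriv T t) * V (t, x)
            = of_real (deriv (deriv (deriv T)) t * x\<^sup>2 / 8 + deriv (deriv chi) t * x / 2 + deriv \<sigma> t)
              - \<i> * of_real (deriv \<rho> t) - \<i> / 4 * of_real (deriv (deriv T) t)"
    using Vc by (simp add: deriv_pow_simps)
  have s0': "\<And>p. schr V \<eta>0 p = 0" using s0 by blast
  have sT1: "smooth (deriv T)" and sT2: "smooth (deriv (deriv T))" and sc1: "smooth (deriv chi)"
    using smooth_real_deriv(2) sT sc by blast+
  have sW1: "smooth (\<lambda>w::real \<times> real \<times> complex. fst w)" by (rule smooth_fst)
  have sW2: "smooth (\<lambda>w::real \<times> real \<times> complex. fst (snd w))"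
    by (rule smooth_linear) (intro bounded_linear_compose[OF bounded_linear_fst bounded_linear_snd])
  have sW3: "smooth (\<lambda>w::real \<times> real \<times> complex. snd (snd w))"
    by (rule smooth_linear) (intro bounded_linear_compose[OF bounded_linear_snd bounded_linear_snd])
  have sW12: "smooth (\<lambda>w::real \<times> real \<times> complex. (fst w, fst (snd w)))"
    by (rule smooth_linear) (intro bounded_linear_Pair bounded_linear_fst bounded_linear_compose[OF bounded_linear_fst bounded_linear_snd])
  have cT: "smooth (\<lambda>w::real \<times> real \<times> complex. f (fst w))" if "smooth f" for f :: "real \<Rightarrow> real"
    by (rule smooth_comp[OF that sW1])
  have ofr: "smooth (\<lambda>w. complex_of_real (g w))" if "smooth g" for g :: "real \<times> real \<times> complex \<Rightarrow> real"
    by (rule smooth_comp[OF smooth_of_real that])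
  have stau: "smooth tau"
  proof -
    have "tau = (\<lambda>w. T (fst w))" unfolding htau by (simp add: fun_eq_iff case_prod_unfold)
    then show ?thesis using cT[OF sT] by simp
  qed
  have sxi: "smooth xi"
  proof -
    have "smooth (\<lambda>w::real \<times> real \<times> complex. deriv T (fst w) * fst (snd w) * (1/2) + chi (fst w))"
      by (intro smooth_add smooth_mult cT sT1 sc sW2 smooth_const)
    moreover have "xi = (\<lambda>w::real \<times> real \<times> complex. deriv T (fst w) * fst (snd w) * (1/2) + chi (fst w))"
      unfolding hxi by (simp add: fun_eq_iff case_prod_unfold)
    ultimately show ?thesis by simp
  qed
  have seta: "smooth eta"
  proof -
    have "smooth (\<lambda>w::real \<times> real \<times> complex. \<i> * complex_of_real (deriv (deriv T) (fst w) * (fst (snd w) * fst (snd w)) * (1/8)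
          + deriv chi (fst w) * fst (snd w) * (1/2) + \<sigma> (fst w)) * snd (snd w)
           + complex_of_real (\<rho> (fst w)) * snd (snd w) + \<eta>0 (fst w, fst (snd w)))"
      by (intro smooth_add smooth_mult smooth_const ofr cT sT2 sc1 ss sr sW2 sW3 smooth_comp[OF se sW12])
    moreover have "eta = (\<lambda>w::real \<times> real \<times> complex. \<i> * complex_of_real (deriv (deriv T) (fst w) * (fst (snd w) * fst (snd w)) * (1/8)
          + deriv chi (fst w) * fst (snd w) * (1/2) + \<sigma> (fst w)) * snd (snd w)
           + complex_of_real (\<rho> (fst w)) * snd (snd w) + \<eta>0 (fst w, fst (snd w)))"
      unfolding heta by (simp add: fun_eq_iff case_prod_unfold power2_eq_square)
    ultimately show ?thesis by simp
  qed
  show "in_lie_alg V tau xi eta"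
    unfolding in_lie_alg_def
  proof (intro conjI stau sxi seta allI impI)
    fix \<psi> :: "real \<times> real \<Rightarrow> complex" and p :: "real \<times> real"
    assume sp: "smooth \<psi>" and sch: "schr V \<psi> p = 0"
    obtain t0 x0 where p: "p = (t0, x0)" by fastforce
    show "prol_E V tau xi eta \<psi> p = 0"
      unfolding p by (rule conv_prol[OF sT sc ss sr se Vc' s0' htau hxi heta sp sch[unfolded p]])
  qed
qed

end
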